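(* Let $\boldsymbol{\mu}=(\mu_s)_{s\ge1}$ be a fixed probability distribution on $\{1,2,\dots\}$ with $\mu_1>0$ and $\sum_{s=1}^\infty s\mu_s<\infty$, and for each $n$ let $\Pi_n\sim ESC_{[n]}(\boldsymbol{\mu})$. Then: (a) for every $s\ge1$, letting $M_{s,n}$ be the number of clusters of size $s$ in $\Pi_n$, as $n\to\infty$, $$\frac{M_{s,n}}{n}\xrightarrow{p}\frac{\mu_s}{\sum_{\ell=1}^\infty \ell\mu_\ell};$$ (b) the size of a cluster chosen uniformly at random among the clusters of $\Pi_n$ converges in distribution to $\boldsymbol{\mu}$ as $n\to\infty$.
   Context: For a fixed distribution $\boldsymbol{\mu}$ on the positive integers with $\mu_1>0$, $ESC_{[n]}(\boldsymbol{\mu})$ is the law of the following random partition of $[n]=\{1,\dots,n\}$: let $S_1,S_2,\dots$ be i.i.d. with law $\boldsymbol{\mu}$, condition on the event $E_n$ that $\sum_{j=1}^k S_j=n$ for some $k\in\mathbb{N}$, let $K$ be that unique $k$, and let $(z_1,\dots,z_n)$ be a uniformly random permutation of the vector with $S_1$ copies of $1$, ..., $S_K$ copies of $K$; the partition has blocks $\{i:z_i=j\}$, $j=1,\dots,K$ (so it has $K$ clusters of sizes $S_1,\dots,S_K$). $\xrightarrow{p}$ denotes convergence in probability. *)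

theory Defs
  imports "HOL-Probability.Probability"
begin

text \<open>Compositions of n: finite sequences (S_1,...,S_K) of positive integers summing to n
  (exactly the outcomes of (S_1,...,S_K) on the event E_n).\<close>
definition compositions :: "nat \<Rightarrow> nat list set" where
  "compositions n = {xs. (\<forall>x\<in>set xs. 1 \<le> x) \<and> sum_list xs = n}"

definition comp_weight :: "nat pmf \<Rightarrow> nat list \<Rightarrow> real" where
  "comp_weight \<mu> xs = (\<Prod>x\<leftarrow>xs. pmf \<mu> x)"

text \<open>Law of (S_1,...,S_K) conditionally on E_n: P(S_1..S_K = xs | E_n)
  = comp_weight xs / P(E_n), with P(E_n) = sum of weights over compositions of n.\<close>
definition cond_sizes :: "nat pmf \<Rightarrow> nat \<Rightarrow> nat list pmf" where
  "cond_sizes \<mu> n = embed_pmf (\<lambda>xs. if xs \<in> compositions n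
      then comp_weight \<mu> xs / (\<Sum>ys\<in>compositions n. comp_weight \<mu> ys) else 0)"

definition label_vector :: "nat list \<Rightarrow> nat list" where
  "label_vector xs = concat (map (\<lambda>j. replicate (xs ! j) (Suc j)) [0..<length xs])"

text \<open>Given sizes xs and a permutation sigma of {1..n}, z_i = v_(sigma i) is a uniformly
  random rearrangement of v; the partition has blocks {i. z_i = j}, j = 1..K.\<close>
definition partition_of :: "nat \<Rightarrow> nat list \<Rightarrow> (nat \<Rightarrow> nat) \<Rightarrow> nat set set" where
  "partition_of n xs \<sigma> =
     (\<lambda>j. {i\<in>{1..n}. label_vector xs ! (\<sigma> i - 1) = j}) ` {1..length xs}"

definition ESC :: "nat \<Rightarrow> nat pmf \<Rightarrow> nat set set pmf" where
  "ESC n \<mu> = bind_pmf (cond_sizes \<mu> n)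
     (\<lambda>xs. map_pmf (partition_of n xs) (pmf_of_set {\<sigma>. \<sigma> permutes {1..n}}))"

definition conv_in_prob_const :: "(nat \<Rightarrow> real pmf) \<Rightarrow> real \<Rightarrow> bool" where
  "conv_in_prob_const P c \<longleftrightarrow>
     (\<forall>\<epsilon>>0. (\<lambda>n. measure_pmf.prob (P n) {x. \<bar>x - c\<bar> > \<epsilon>}) \<longlonglongrightarrow> 0)"

end

theory Submission
  imports Defs "HOL-Computational_Algebra.Formal_Power_Series" "HOL-Analysis.Analysis"
begin


lemma length_le_sum_list: "\<forall>x\<in>set xs. 1 \<le> x \<Longrightarrow> length xs \<le> sum_list (xs::nat list)"
  by (induction xs) auto

lemma compositions_0: "compositions 0 = {[]}"
  unfolding compositions_def
  apply auto apply (case_tac x) apply auto done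

lemma Cons_compositions: "x # ys \<in> compositions n \<longleftrightarrow> 1 \<le> x \<and> x \<le> n \<and> ys \<in> compositions (n - x)"
  unfolding compositions_def by auto

lemma finite_compositions: "finite (compositions n)"
proof -
  have "compositions n \<subseteq> {xs. set xs \<subseteq> {..n} \<and> length xs \<le> n}"
    unfolding compositions_def
    using length_le_sum_list member_le_sum_list by fastforce
  moreover have "finite {xs. set xs \<subseteq> {..n} \<and> length xs \<le> n}"
    by (rule finite_lists_length_le) auto
  ultimately show ?thesis by (rule finite_subset)
qed

lemma compositions_decomp:
  assumes "n \<ge> 1"
  shows "compositions n = (\<Union>x\<in>{1..n}. (\<lambda>ys. x # ys) ` compositions (n - x))"
proof
  show "compositions n \<subseteq> (\<Union>x\<in>{1..n}. (\<lambda>ys. x # ys) ` compositions (n - x))"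
  proof
    fix xs assume xs: "xs \<in> compositions n"
    show "xs \<in> (\<Union>x\<in>{1..n}. (\<lambda>ys. x # ys) ` compositions (n - x))"
    proof (cases xs)
      case Nil then show ?thesis using xs assms by (simp add: compositions_def)
    next
      case (Cons x ys) then show ?thesis using xs Cons_compositions by auto
    qed
  qed
qed (auto simp: Cons_compositions)

lemma sum_compositions:
  assumes "n \<ge> 1"
  shows "(\<Sum>xs\<in>compositions n. f xs) = (\<Sum>x=1..n. \<Sum>ys\<in>compositions (n - x). f (x # ys))"
proof -
  have "(\<Sum>xs\<in>compositions n. f xs) = (\<Sum>x=1..n. \<Sum>xs\<in>(\<lambda>ys. x # ys) ` compositions (n - x). f xs)"
    unfolding compositions_decomp[OF assms]
    by (rule sum.UNION_disjoint) (auto simp: finite_compositions)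
  also have "\<dots> = (\<Sum>x=1..n. \<Sum>ys\<in>compositions (n - x). f (x # ys))"
    by (rule sum.cong) (auto simp: sum.reindex inj_on_def)
  finally show ?thesis .
qed

definition uu :: "nat pmf \<Rightarrow> nat \<Rightarrow> real" where
  "uu \<mu> n = (\<Sum>xs\<in>compositions n. comp_weight \<mu> xs)"

lemma comp_weight_Cons: "comp_weight \<mu> (x # ys) = pmf \<mu> x * comp_weight \<mu> ys"
  by (simp add: comp_weight_def)

lemma comp_weight_nonneg: "comp_weight \<mu> xs \<ge> 0"
  unfolding comp_weight_def by (induction xs) auto

lemma uu_0: "uu \<mu> 0 = 1"
  by (simp add: uu_def compositions_0 comp_weight_def)

lemma uu_rec: "n \<ge> 1 \<Longrightarrow> uu \<mu> n = (\<Sum>x=1..n. pmf \<mu> x * uu \<mu> (n - x))"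
  unfolding uu_def by (simp add: sum_compositions comp_weight_Cons sum_distrib_left)

lemma uu_nonneg: "uu \<mu> n \<ge> 0"
  unfolding uu_def by (simp add: sum_nonneg comp_weight_nonneg)

lemma replicate_compositions: "replicate n (Suc 0) \<in> compositions n"
  unfolding compositions_def by (auto simp: sum_list_replicate)

lemma uu_pos: assumes "pmf \<mu> 1 > 0" shows "uu \<mu> n > 0"
proof -
  have "comp_weight \<mu> (replicate n 1) = pmf \<mu> 1 ^ n"
    by (induction n) (auto simp: comp_weight_def)
  hence "0 < comp_weight \<mu> (replicate n 1)" using assms by simp
  also have "\<dots> \<le> uu \<mu> n" unfolding uu_def
    by (rule member_le_sum) (auto simp: finite_compositions replicate_compositions comp_weight_nonneg)
  finally show ?thesis .
qed

lemma pmf_cond_sizes: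
  assumes "pmf \<mu> 1 > 0"
  shows "pmf (cond_sizes \<mu> n) xs = (if xs \<in> compositions n then comp_weight \<mu> xs / uu \<mu> n else 0)"
proof -
  let ?f = "\<lambda>xs. if xs \<in> compositions n then comp_weight \<mu> xs / (\<Sum>ys\<in>compositions n. comp_weight \<mu> ys) else 0"
  have pos: "uu \<mu> n > 0" using uu_pos[OF assms] .
  have "(\<integral>\<^sup>+ x. ennreal (?f x) \<partial>count_space UNIV) = (\<integral>\<^sup>+ x. ennreal (?f x) * indicator (compositions n) x \<partial>count_space UNIV)"
    by (intro nn_integral_cong) (auto simp: indicator_def)
  also have "\<dots> = (\<Sum>x\<in>compositions n. ennreal (?f x))"
    by (subst nn_integral_indicator_finite) (auto simp: finite_compositions)
  also have "\<dots> = ennreal (\<Sum>x\<in>compositions n. ?f x)"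
    by (rule sum_ennreal) (auto simp: comp_weight_nonneg uu_nonneg divide_nonneg_nonneg sum_nonneg)
  also have "(\<Sum>x\<in>compositions n. ?f x) = (\<Sum>x\<in>compositions n. comp_weight \<mu> x / uu \<mu> n)"
    by (simp add: uu_def)
  also have "\<dots> = 1" using pos by (simp add: sum_divide_distrib[symmetric] uu_def)
  finally have int: "(\<integral>\<^sup>+ x. ennreal (?f x) \<partial>count_space UNIV) = 1" by simp
  show ?thesis unfolding cond_sizes_def
    by (subst pmf_embed_pmf) (auto simp: int comp_weight_nonneg uu_def divide_nonneg_nonneg sum_nonneg)
qed

lemma set_pmf_cond_sizes:
  assumes "pmf \<mu> 1 > 0"
  shows "set_pmf (cond_sizes \<mu> n) \<subseteq> compositions n"
  using pmf_cond_sizes[OF assms] by (auto simp: set_pmf_eq)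

lemma in_set_pmf_cond_sizes:
  "pmf \<mu> 1 > 0 \<Longrightarrow> xs \<in> set_pmf (cond_sizes \<mu> n) \<Longrightarrow> xs \<in> compositions n"
  using set_pmf_cond_sizes by blast

lemma integral_cond_sizes:
  assumes "pmf \<mu> 1 > 0"
  shows "measure_pmf.expectation (cond_sizes \<mu> n) f = (\<Sum>xs\<in>compositions n. comp_weight \<mu> xs * f xs) / uu \<mu> n"
  by (subst integral_measure_pmf_real[OF finite_compositions])
     (auto dest: in_set_pmf_cond_sizes[OF assms] simp: pmf_cond_sizes[OF assms] sum_divide_distrib mult.commute)

lemma prob_cond_sizes:
  assumes "pmf \<mu> 1 > 0"
  shows "measure_pmf.prob (cond_sizes \<mu> n) S = (\<Sum>xs\<in>compositions n \<inter> S. comp_weight \<mu> xs) / uu \<mu> n"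
proof -
  have "measure_pmf.prob (cond_sizes \<mu> n) S = measure_pmf.prob (cond_sizes \<mu> n) (compositions n \<inter> S)"
    using set_pmf_cond_sizes[OF assms]
    by (intro measure_eq_AE) (auto simp: AE_measure_pmf_iff)
  also have "\<dots> = (\<Sum>xs\<in>compositions n \<inter> S. pmf (cond_sizes \<mu> n) xs)"
    by (rule measure_measure_pmf_finite) (simp add: finite_compositions)
  also have "\<dots> = (\<Sum>xs\<in>compositions n \<inter> S. comp_weight \<mu> xs / uu \<mu> n)"
    by (rule sum.cong) (auto simp: pmf_cond_sizes[OF assms])
  finally show ?thesis by (simp add: sum_divide_distrib)
qed


lemma length_label_vector: "length (label_vector xs) = sum_list xs"
  unfolding label_vector_def
  by (simp add: length_concat map_map o_def sum_list_sum_nth sum_set_upt_conv_sum_list_nat[symmetric]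
      atLeast0LessThan)

lemma count_label_vector:
  "length (filter (\<lambda>y. y = j) (label_vector xs)) = (if 1 \<le> j \<and> j \<le> length xs then xs ! (j - 1) else 0)"
proof -
  have "length (filter (\<lambda>y. y = j) (label_vector xs))
      = (\<Sum>i\<in>{0..<length xs}. if Suc i = j then xs ! i else 0)"
    unfolding label_vector_def
    by (simp add: filter_concat length_concat map_map o_def filter_replicate
        sum_set_upt_conv_sum_list_nat[symmetric] if_distrib[of length] cong: if_cong)
  also have "\<dots> = (\<Sum>i\<in>{0..<length xs}. if i = j - 1 \<and> j \<ge> 1 then xs ! i else 0)"
    by (rule sum.cong) auto
  also have "\<dots> = (if 1 \<le> j \<and> j \<le> length xs then xs ! (j - 1) else 0)"
    by (cases "j \<ge> 1") (auto simp: sum.delta')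
  finally show ?thesis .
qed

lemma card_block:
  fixes n :: nat and \<sigma> :: "nat \<Rightarrow> nat"
  assumes "\<sigma> permutes {1..n}"
  shows "card {i\<in>{1..n}. P (\<sigma> i - 1)} = card {p. p < n \<and> P p}"
proof -
  have bij: "bij_betw \<sigma> {1..n} {1..n}" using assms by (rule permutes_imp_bij)
  have "bij_betw \<sigma> {i\<in>{1..n}. \<sigma> i \<in> {k\<in>{1..n}. P (k - 1)}} {k\<in>{1..n}. P (k - 1)}"
  proof (rule bij_betw_subset[OF bij])
    show "\<sigma> ` {i \<in> {1..n}. \<sigma> i \<in> {k \<in> {1..n}. P (k - 1)}} = {k \<in> {1..n}. P (k - 1)}"
    proof
      show "{k \<in> {1..n}. P (k - 1)} \<subseteq> \<sigma> ` {i \<in> {1..n}. \<sigma> i \<in> {k \<in> {1..n}. P (k - 1)}}"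
      proof
        fix k assume k: "k \<in> {k \<in> {1..n}. P (k - 1)}"
        hence "k \<in> \<sigma> ` {1..n}" using bij unfolding bij_betw_def by auto
        then obtain i where "i \<in> {1..n}" "\<sigma> i = k" by blast
        thus "k \<in> \<sigma> ` {i \<in> {1..n}. \<sigma> i \<in> {k \<in> {1..n}. P (k - 1)}}" using k by auto
      qed
    qed auto
  qed auto
  moreover have "{i\<in>{1..n}. P (\<sigma> i - 1)} = {i\<in>{1..n}. \<sigma> i \<in> {k\<in>{1..n}. P (k - 1)}}"
    using bij by (auto simp: bij_betw_def)
  ultimately have "card {i\<in>{1..n}. P (\<sigma> i - 1)} = card {k\<in>{1..n}. P (k - 1)}"
    by (simp only:) (rule bij_betw_same_card)
  also have "{k\<in>{1..n}. P (k - 1)} = Suc ` {p. p < n \<and> P p}"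
  proof safe
    fix k assume "k \<in> {1..n}" "P (k - 1)"
    then show "k \<in> Suc ` {p. p < n \<and> P p}" by (intro image_eqI[of _ _ "k - 1"]) auto
  qed auto
  also have "card \<dots> = card {p. p < n \<and> P p}" by (simp add: card_image)
  finally show ?thesis .
qed

definition block :: "nat \<Rightarrow> nat list \<Rightarrow> (nat \<Rightarrow> nat) \<Rightarrow> nat \<Rightarrow> nat set" where
  "block n xs \<sigma> j = {i\<in>{1..n}. label_vector xs ! (\<sigma> i - 1) = j}"

lemma card_block_eq:
  assumes "xs \<in> compositions n" "\<sigma> permutes {1..n}" "j \<in> {1..length xs}"
  shows "card (block n xs \<sigma> j) = xs ! (j - 1)"
proof -
  have len: "length (label_vector xs) = n" using assms(1)
    by (simp add: length_label_vector compositions_def)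
  have "card (block n xs \<sigma> j) = card {p. p < n \<and> label_vector xs ! p = j}"
    unfolding block_def by (rule card_block[OF assms(2)])
  also have "\<dots> = length (filter (\<lambda>y. y = j) (label_vector xs))"
    by (simp add: length_filter_conv_card len)
  also have "\<dots> = xs ! (j - 1)" using assms(3) by (simp add: count_label_vector)
  finally show ?thesis .
qed

lemma partition_of_block: "partition_of n xs \<sigma> = block n xs \<sigma> ` {1..length xs}"
  unfolding partition_of_def block_def by simp

lemma inj_block:
  assumes "xs \<in> compositions n" "\<sigma> permutes {1..n}"
  shows "inj_on (block n xs \<sigma>) {1..length xs}"
proof
  fix j j' assume j: "j \<in> {1..length xs}" and j': "j' \<in> {1..length xs}"
    and eq: "block n xs \<sigma> j = block n xs \<sigma> j'"
  have "xs ! (j - 1) \<in> set xs" using j by auto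
  hence "xs ! (j - 1) \<ge> 1" using assms(1) by (auto simp: compositions_def)
  hence "card (block n xs \<sigma> j) \<ge> 1" using card_block_eq[OF assms j] by simp
  then obtain i where "i \<in> block n xs \<sigma> j"
    by (metis card.empty ex_in_conv not_one_le_zero)
  moreover hence "i \<in> block n xs \<sigma> j'" using eq by simp
  ultimately show "j = j'" unfolding block_def by auto
qed

lemma card_partition_filter:
  assumes "xs \<in> compositions n" "\<sigma> permutes {1..n}"
  shows "card {B\<in>partition_of n xs \<sigma>. P (card B)} = length (filter P xs)"
proof -
  have "{B\<in>partition_of n xs \<sigma>. P (card B)} = block n xs \<sigma> ` {j\<in>{1..length xs}. P (xs ! (j - 1))}"
    unfolding partition_of_block using card_block_eq[OF assms] by auto
  also have "card \<dots> = card {j\<in>{1..length xs}. P (xs ! (j - 1))}"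
    by (rule card_image, rule inj_on_subset[OF inj_block[OF assms]]) auto
  also have "{j\<in>{1..length xs}. P (xs ! (j - 1))} = Suc ` {i. i < length xs \<and> P (xs ! i)}"
  proof safe
    fix k assume "k \<in> {1..length xs}" "P (xs ! (k - 1))"
    then show "k \<in> Suc ` {i. i < length xs \<and> P (xs ! i)}" by (intro image_eqI[of _ _ "k - 1"]) auto
  qed auto
  also have "card \<dots> = length (filter P xs)" by (simp add: card_image length_filter_conv_card)
  finally show ?thesis .
qed

lemma card_partition:
  assumes "xs \<in> compositions n" "\<sigma> permutes {1..n}"
  shows "card (partition_of n xs \<sigma>) = length xs"
  using card_partition_filter[OF assms, of "\<lambda>_. True"] by simp

lemma set_pmf_perms: "finite S \<Longrightarrow> set_pmf (pmf_of_set {\<sigma>. \<sigma> permutes S}) = {\<sigma>. \<sigma> permutes S}"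
  by (rule set_pmf_of_set) (auto simp: finite_permutations intro: exI[of _ id] permutes_id)

lemma ESC_map:
  assumes "pmf \<mu> 1 > 0"
    and "\<And>xs \<sigma>. xs \<in> compositions n \<Longrightarrow> \<sigma> permutes {1..n} \<Longrightarrow> h (partition_of n xs \<sigma>) = h' xs"
  shows "map_pmf h (ESC n \<mu>) = map_pmf h' (cond_sizes \<mu> n)"
proof -
  have "map_pmf h (ESC n \<mu>) = bind_pmf (cond_sizes \<mu> n)
      (\<lambda>xs. map_pmf (h \<circ> partition_of n xs) (pmf_of_set {\<sigma>. \<sigma> permutes {1..n}}))"
    unfolding ESC_def map_bind_pmf by (simp add: pmf.map_comp)
  also have "\<dots> = bind_pmf (cond_sizes \<mu> n) (\<lambda>xs. return_pmf (h' xs))"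
  proof (rule bind_pmf_cong)
    fix xs assume "xs \<in> set_pmf (cond_sizes \<mu> n)"
    hence xs: "xs \<in> compositions n" by (rule in_set_pmf_cond_sizes[OF assms(1)])
    have "map_pmf (h \<circ> partition_of n xs) (pmf_of_set {\<sigma>. \<sigma> permutes {1..n}})
        = map_pmf (\<lambda>_. h' xs) (pmf_of_set {\<sigma>. \<sigma> permutes {1..n}})"
      by (rule map_pmf_cong) (auto simp: set_pmf_perms assms(2)[OF xs])
    thus "map_pmf (h \<circ> partition_of n xs) (pmf_of_set {\<sigma>. \<sigma> permutes {1..n}}) = return_pmf (h' xs)"
      by simp
  qed simp
  also have "\<dots> = map_pmf h' (cond_sizes \<mu> n)" by (simp add: map_pmf_def)
  finally show ?thesis .
qed

lemma pmf_uniform_cluster: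
  assumes "pmf \<mu> 1 > 0" "n \<ge> 1"
  shows "pmf (bind_pmf (ESC n \<mu>) (\<lambda>Q. map_pmf card (pmf_of_set Q))) k
       = measure_pmf.expectation (cond_sizes \<mu> n) (\<lambda>xs. real (length (filter (\<lambda>x. x = k) xs)) / real (length xs))"
proof -
  let ?Pm = "pmf_of_set {\<sigma>. \<sigma> permutes {1..n}}"
  have "pmf (bind_pmf (ESC n \<mu>) (\<lambda>Q. map_pmf card (pmf_of_set Q))) k
      = pmf (bind_pmf (cond_sizes \<mu> n) (\<lambda>xs. bind_pmf ?Pm (\<lambda>\<sigma>. map_pmf card (pmf_of_set (partition_of n xs \<sigma>))))) k"
    unfolding ESC_def by (simp add: bind_assoc_pmf bind_map_pmf)
  also have "\<dots> = measure_pmf.expectation (cond_sizes \<mu> n)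
      (\<lambda>xs. pmf (bind_pmf ?Pm (\<lambda>\<sigma>. map_pmf card (pmf_of_set (partition_of n xs \<sigma>)))) k)"
    by (rule pmf_bind)
  also have "\<dots> = measure_pmf.expectation (cond_sizes \<mu> n) (\<lambda>xs. real (length (filter (\<lambda>x. x = k) xs)) / real (length xs))"
  proof (rule integral_cong_AE)
    show "AE xs in measure_pmf (cond_sizes \<mu> n).
      pmf (bind_pmf ?Pm (\<lambda>\<sigma>. map_pmf card (pmf_of_set (partition_of n xs \<sigma>)))) k =
        real (length (filter (\<lambda>x. x = k) xs)) / real (length xs)"
    proof (rule AE_pmfI)
      fix xs assume "xs \<in> set_pmf (cond_sizes \<mu> n)"
      hence xs: "xs \<in> compositions n" by (rule in_set_pmf_cond_sizes[OF assms(1)])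
      have ne: "xs \<noteq> []" using xs assms(2) by (auto simp: compositions_def)
      have "pmf (bind_pmf ?Pm (\<lambda>\<sigma>. map_pmf card (pmf_of_set (partition_of n xs \<sigma>)))) k
          = measure_pmf.expectation ?Pm (\<lambda>\<sigma>. pmf (map_pmf card (pmf_of_set (partition_of n xs \<sigma>))) k)"
        by (rule pmf_bind)
      also have "\<dots> = measure_pmf.expectation ?Pm (\<lambda>\<sigma>. real (length (filter (\<lambda>x. x = k) xs)) / real (length xs))"
      proof (rule integral_cong_AE)
        show "AE \<sigma> in measure_pmf ?Pm. pmf (map_pmf card (pmf_of_set (partition_of n xs \<sigma>))) k =
            real (length (filter (\<lambda>x. x = k) xs)) / real (length xs)"
        proof (rule AE_pmfI)
          fix \<sigma> assume "\<sigma> \<in> set_pmf ?Pm"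
          hence \<sigma>: "\<sigma> permutes {1..n}" by (simp add: set_pmf_perms)
          have fin: "finite (partition_of n xs \<sigma>)" by (simp add: partition_of_def)
          have nemp: "partition_of n xs \<sigma> \<noteq> {}"
            using card_partition[OF xs \<sigma>] ne by auto
          have "pmf (map_pmf card (pmf_of_set (partition_of n xs \<sigma>))) k
              = card (partition_of n xs \<sigma> \<inter> card -` {k}) / card (partition_of n xs \<sigma>)"
            by (simp add: pmf_map measure_pmf_of_set[OF nemp fin])
          also have "partition_of n xs \<sigma> \<inter> card -` {k} = {B\<in>partition_of n xs \<sigma>. card B = k}" by auto
          finally show "pmf (map_pmf card (pmf_of_set (partition_of n xs \<sigma>))) k =
            real (length (filter (\<lambda>x. x = k) xs)) / real (length xs)"
            using card_partition_filter[OF xs \<sigma>, of "\<lambda>x. x = k"] card_partition[OF xs \<sigma>] by simp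
        qed
      qed auto
      also have "\<dots> = real (length (filter (\<lambda>x. x = k) xs)) / real (length xs)" by simp
      finally show "pmf (bind_pmf ?Pm (\<lambda>\<sigma>. map_pmf card (pmf_of_set (partition_of n xs \<sigma>)))) k =
        real (length (filter (\<lambda>x. x = k) xs)) / real (length xs)" .
    qed
  qed auto
  finally show ?thesis .
qed


unbundle no vec_syntax
unbundle fps_syntax

definition cntA :: "nat set \<Rightarrow> nat list \<Rightarrow> nat" where
  "cntA A xs = length (filter (\<lambda>x. x \<in> A) xs)"

fun prs :: "nat set \<Rightarrow> nat list \<Rightarrow> nat" where
  "prs A [] = 0"
| "prs A (x # ys) = (if x \<in> A then cntA A ys else 0) + prs A ys"

lemma cntA_Cons: "cntA A (x # ys) = (if x \<in> A then 1 else 0) + cntA A ys"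
  by (simp add: cntA_def)

lemma cntA_Nil[simp]: "cntA A [] = 0" by (simp add: cntA_def)

lemma cntA_Cons_real: "real (cntA A (x # ys)) = (if x \<in> A then 1 else 0) + real (cntA A ys)"
  by (simp add: cntA_def)

lemma prs_Cons_real: "real (prs A (x # ys)) = (if x \<in> A then real (cntA A ys) else 0) + real (prs A ys)"
  by simp

lemma cntA_sq: "(cntA A xs)^2 = cntA A xs + 2 * prs A xs"
  by (induction xs) (auto simp: cntA_Cons power2_eq_square algebra_simps)

lemma sum_zero_head: "f 0 = 0 \<Longrightarrow> (\<Sum>i=0..(n::nat). f i) = (\<Sum>i=1..n. (f i :: real))"
  by (simp add: sum.atLeast_Suc_atMost)

definition aa :: "nat pmf \<Rightarrow> nat set \<Rightarrow> nat \<Rightarrow> real" where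
  "aa \<mu> A n = (\<Sum>xs\<in>compositions n. comp_weight \<mu> xs * real (cntA A xs))"

definition pp :: "nat pmf \<Rightarrow> nat set \<Rightarrow> nat \<Rightarrow> real" where
  "pp \<mu> A n = (\<Sum>xs\<in>compositions n. comp_weight \<mu> xs * real (prs A xs))"

definition gg :: "nat pmf \<Rightarrow> nat set \<Rightarrow> nat \<Rightarrow> real" where
  "gg \<mu> A N = (\<Sum>x=0..N. (if x \<in> A then pmf \<mu> x else 0) * uu \<mu> (N - x))"

definition rr :: "nat pmf \<Rightarrow> nat \<Rightarrow> real" where
  "rr \<mu> k = 1 - (\<Sum>j\<le>k. pmf \<mu> j)"

context
  fixes \<mu> :: "nat pmf"
  assumes mu0: "pmf \<mu> 0 = 0"
begin

definition "MF = Abs_fps (\<lambda>k. pmf \<mu> k)"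
definition "UF = Abs_fps (uu \<mu>)"
definition "MA A = Abs_fps (\<lambda>k. if k \<in> A then pmf \<mu> k else 0)"
definition "AF A = Abs_fps (aa \<mu> A)"
definition "PF A = Abs_fps (pp \<mu> A)"
definition "RF = Abs_fps (rr \<mu>)"

lemma UF_eq: "UF = 1 + MF * UF"
proof (rule fps_ext)
  fix n show "UF $ n = (1 + MF * UF) $ n"
  proof (cases "n = 0")
    case True thus ?thesis by (simp add: UF_def MF_def uu_0 mu0)
  next
    case False
    hence "uu \<mu> n = (\<Sum>x=1..n. pmf \<mu> x * uu \<mu> (n - x))" by (intro uu_rec) simp
    also have "\<dots> = (\<Sum>x=0..n. pmf \<mu> x * uu \<mu> (n - x))" by (rule sum_zero_head[symmetric]) (simp add: mu0)
    finally show ?thesis using False by (simp add: UF_def MF_def fps_mult_nth)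
  qed
qed

lemma UF_inv: "UF * (1 - MF) = 1"
proof -
  have "UF * (1 - MF) = UF - MF * UF" by (simp add: algebra_simps)
  also have "\<dots> = 1" by (metis UF_eq add_diff_cancel_right')
  finally show ?thesis .
qed

lemma AF_eq: "AF A = MA A * UF + MF * AF A"
proof (rule fps_ext)
  fix n show "AF A $ n = (MA A * UF + MF * AF A) $ n"
  proof (cases "n = 0")
    case True thus ?thesis by (simp add: AF_def MA_def MF_def aa_def compositions_0 mu0 cntA_def)
  next
    case False
    have "aa \<mu> A n = (\<Sum>x=1..n. \<Sum>ys\<in>compositions (n - x).
        pmf \<mu> x * comp_weight \<mu> ys * ((if x \<in> A then 1 else 0) + real (cntA A ys)))"
      unfolding aa_def using False by (simp add: sum_compositions comp_weight_Cons cntA_Cons_real)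
    also have "\<dots> = (\<Sum>x=1..n. (if x \<in> A then pmf \<mu> x else 0) * uu \<mu> (n - x) + pmf \<mu> x * aa \<mu> A (n - x))"
      by (rule sum.cong) (auto simp: uu_def aa_def sum_distrib_left sum.distrib algebra_simps)
    also have "\<dots> = (\<Sum>x=0..n. (if x \<in> A then pmf \<mu> x else 0) * uu \<mu> (n - x) + pmf \<mu> x * aa \<mu> A (n - x))"
      by (rule sum_zero_head[symmetric]) (simp add: mu0)
    finally show ?thesis by (simp add: AF_def MA_def MF_def UF_def fps_mult_nth sum.distrib)
  qed
qed

lemma PF_eq: "PF A = MA A * AF A + MF * PF A"
proof (rule fps_ext)
  fix n show "PF A $ n = (MA A * AF A + MF * PF A) $ n"
  proof (cases "n = 0")
    case True thus ?thesis by (simp add: PF_def MA_def MF_def pp_def compositions_0 mu0)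
  next
    case False
    have "pp \<mu> A n = (\<Sum>x=1..n. \<Sum>ys\<in>compositions (n - x).
        pmf \<mu> x * comp_weight \<mu> ys * ((if x \<in> A then real (cntA A ys) else 0) + real (prs A ys)))"
      unfolding pp_def using False by (simp del: prs.simps add: sum_compositions comp_weight_Cons prs_Cons_real)
    also have "\<dots> = (\<Sum>x=1..n. (if x \<in> A then pmf \<mu> x else 0) * aa \<mu> A (n - x) + pmf \<mu> x * pp \<mu> A (n - x))"
      by (rule sum.cong) (auto simp: pp_def aa_def sum_distrib_left sum.distrib algebra_simps)
    also have "\<dots> = (\<Sum>x=0..n. (if x \<in> A then pmf \<mu> x else 0) * aa \<mu> A (n - x) + pmf \<mu> x * pp \<mu> A (n - x))"
      by (rule sum_zero_head[symmetric]) (simp add: mu0)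
    finally show ?thesis by (simp add: PF_def MA_def AF_def MF_def fps_mult_nth sum.distrib)
  qed
qed

lemma solve: "F = G + MF * F \<Longrightarrow> F = UF * G"
proof -
  assume F: "F = G + MF * F"
  have "F - MF * F = G" by (metis F add_diff_cancel_right')
  hence "F * (1 - MF) = G" by (simp add: algebra_simps)
  hence "UF * (F * (1 - MF)) = UF * G" by simp
  also have "UF * (F * (1 - MF)) = F * (UF * (1 - MF))" by (simp add: algebra_simps)
  finally show ?thesis by (simp add: UF_inv)
qed

lemma AF_sol: "AF A = UF * (MA A * UF)"
  by (rule solve) (rule AF_eq)

lemma PF_sol: "PF A = AF A * (MA A * UF)"
proof -
  have "PF A = UF * (MA A * AF A)" by (rule solve) (rule PF_eq)
  also have "\<dots> = AF A * (MA A * UF)" by (simp add: AF_sol algebra_simps)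
  finally show ?thesis .
qed

lemma gg_eq: "gg \<mu> A N = (MA A * UF) $ N"
  by (simp add: gg_def MA_def UF_def fps_mult_nth)

lemma aa_conv: "aa \<mu> A n = (\<Sum>i=0..n. uu \<mu> i * gg \<mu> A (n - i))"
proof -
  have "aa \<mu> A n = AF A $ n" by (simp add: AF_def)
  also have "\<dots> = (\<Sum>i=0..n. uu \<mu> i * gg \<mu> A (n - i))"
    by (simp add: AF_sol fps_mult_nth gg_eq UF_def)
  finally show ?thesis .
qed

lemma pp_conv: "pp \<mu> A n = (\<Sum>i=0..n. aa \<mu> A i * gg \<mu> A (n - i))"
proof -
  have "pp \<mu> A n = PF A $ n" by (simp add: PF_def)
  also have "\<dots> = (\<Sum>i=0..n. aa \<mu> A i * gg \<mu> A (n - i))"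
    by (simp add: PF_sol fps_mult_nth gg_eq AF_def)
  finally show ?thesis .
qed

lemma RF_eq: "(1 - fps_X) * RF = 1 - MF"
proof (rule fps_ext)
  fix n show "((1 - fps_X) * RF) $ n = (1 - MF) $ n"
  proof (cases n)
    case 0 thus ?thesis by (simp add: RF_def MF_def rr_def mu0 algebra_simps)
  next
    case (Suc m) thus ?thesis by (simp add: RF_def MF_def rr_def algebra_simps)
  qed
qed

lemma renewal_identity: "(\<Sum>k=0..n. rr \<mu> k * uu \<mu> (n - k)) = 1"
proof -
  define H where "H = RF * UF"
  have "H * (1 - fps_X) = UF * ((1 - fps_X) * RF)" by (simp add: H_def algebra_simps)
  also have "\<dots> = 1" by (simp add: RF_eq UF_inv)
  finally have H: "H * (1 - fps_X) = 1" .
  have "H $ n = 1"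
  proof (induction n)
    case 0 show ?case using arg_cong[OF H, of "\<lambda>F. F $ 0"] by simp
  next
    case (Suc n) show ?case using arg_cong[OF H, of "\<lambda>F. F $ Suc n"] Suc by (simp add: algebra_simps)
  qed
  thus ?thesis by (simp add: H_def fps_mult_nth RF_def UF_def)
qed

end


lemma sum_pmf_le_1: "finite S \<Longrightarrow> (\<Sum>x\<in>S. pmf \<mu> x) \<le> 1"
  using measure_measure_pmf_finite[of S \<mu>] measure_pmf.prob_le_1[of \<mu> S] by simp

lemma limsup_exists:
  fixes f :: "nat \<Rightarrow> real"
  assumes "\<And>n. 0 \<le> f n" "\<And>n. f n \<le> 1"
  shows "\<exists>L. (\<forall>\<epsilon>>0. \<exists>N. \<forall>n\<ge>N. f n < L + \<epsilon>) \<and> (\<forall>\<epsilon>>0. \<forall>N. \<exists>n\<ge>N. f n > L - \<epsilon>)"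
proof -
  define T where "T N = (SUP n\<in>{N..}. f n)" for N
  have bddA: "bdd_above (f ` {N..})" for N using assms(2) by (auto intro: bdd_aboveI[of _ 1])
  have Tge: "f n \<le> T N" if "n \<ge> N" for n N
    unfolding T_def using that bddA by (intro cSUP_upper) auto
  have Tnn: "0 \<le> T N" for N using Tge[of N N] assms(1)[of N] by simp
  have bddB: "bdd_below (range T)" using Tnn by (auto intro: bdd_belowI[of _ 0])
  define L where "L = (INF N. T N)"
  have LT: "L \<le> T N" for N unfolding L_def using bddB by (intro cINF_lower) auto
  show ?thesis
  proof (rule exI[of _ L], intro conjI allI impI)
    fix \<epsilon> :: real assume e: "\<epsilon> > 0"
    have "(INF N. T N) < L + \<epsilon>" using e by (simp add: L_def)
    then obtain N where "T N < L + \<epsilon>" using bddB by (subst (asm) cINF_less_iff) auto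
    thus "\<exists>N. \<forall>n\<ge>N. f n < L + \<epsilon>" using Tge by (meson le_less_trans)
  next
    fix \<epsilon> :: real and N :: nat assume e: "\<epsilon> > 0"
    have "L - \<epsilon> < T N" using LT[of N] e by simp
    then obtain n where "n \<in> {N..}" "L - \<epsilon> < f n"
      unfolding T_def using bddA by (subst (asm) less_cSUP_iff) auto
    thus "\<exists>n\<ge>N. f n > L - \<epsilon>" by auto
  qed
qed

locale ren =
  fixes \<mu> :: "nat pmf"
  assumes mu0: "pmf \<mu> 0 = 0"
    and mu1: "pmf \<mu> 1 > 0"
    and summ: "summable (\<lambda>s. real s * pmf \<mu> s)"
begin

lemma rr_nonneg: "rr \<mu> k \<ge> 0"
  unfolding rr_def using sum_pmf_le_1[of "{..k}" \<mu>] by simp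

lemma rr_0: "rr \<mu> 0 = 1" by (simp add: rr_def mu0)

lemma rr_Suc: "rr \<mu> (Suc k) = rr \<mu> k - pmf \<mu> (Suc k)" by (simp add: rr_def)

lemma partial_pmf_lim: "(\<lambda>k. \<Sum>j\<le>k. pmf \<mu> j) \<longlonglongrightarrow> 1"
proof -
  have "(\<lambda>k. measure_pmf.prob \<mu> {..k}) \<longlonglongrightarrow> measure_pmf.prob \<mu> (\<Union>k. {..k})"
    by (rule measure_pmf.finite_Lim_measure_incseq) (auto simp: incseq_def)
  moreover have "(\<Union>k. {..k::nat}) = UNIV" by auto
  ultimately show ?thesis by (simp add: measure_measure_pmf_finite)
qed

lemma rr_lim: "rr \<mu> \<longlonglongrightarrow> 0"
  unfolding rr_def using tendsto_diff[OF tendsto_const[of 1] partial_pmf_lim] by simp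

lemma uu_le_1: "uu \<mu> n \<le> 1"
proof -
  have "rr \<mu> 0 * uu \<mu> (n - 0) \<le> (\<Sum>k=0..n. rr \<mu> k * uu \<mu> (n - k))"
    by (rule member_le_sum) (auto intro!: mult_nonneg_nonneg rr_nonneg uu_nonneg)
  thus ?thesis by (simp add: renewal_identity[OF mu0] rr_0)
qed

lemma pmf_sums: "pmf \<mu> sums 1"
  unfolding sums_def by (rule LIMSEQ_imp_Suc) (use partial_pmf_lim in \<open>simp add: lessThan_Suc_atMost\<close>)

lemma rr_tail: "rr \<mu> n = (\<Sum>j. pmf \<mu> (j + Suc n))"
proof -
  have "1 = (\<Sum>j. pmf \<mu> (j + Suc n)) + (\<Sum>i<Suc n. pmf \<mu> i)"
    using suminf_split_initial_segment[OF sums_summable[OF pmf_sums], of "Suc n"] sums_unique[OF pmf_sums]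
    by simp
  thus ?thesis by (simp add: rr_def lessThan_Suc_atMost)
qed

definition "mm = (\<Sum>l. real l * pmf \<mu> l)"

lemma mm_pos: "mm > 0"
proof -
  have "(\<Sum>l\<in>{1}. real l * pmf \<mu> l) \<le> mm" unfolding mm_def
    by (rule sum_le_suminf[OF summ]) auto
  thus ?thesis using mu1 by simp
qed

lemma n_rr_lim: "(\<lambda>n. real n * rr \<mu> n) \<longlonglongrightarrow> 0"
proof -
  define t where "t n = (\<Sum>j. real (j + Suc n) * pmf \<mu> (j + Suc n))" for n
  have t: "t n = mm - (\<Sum>i<Suc n. real i * pmf \<mu> i)" for n
    using suminf_split_initial_segment[OF summ, of "Suc n"] unfolding t_def mm_def by simp
  have "(\<lambda>n. \<Sum>i<Suc n. real i * pmf \<mu> i) \<longlonglongrightarrow> mm"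
    using summable_LIMSEQ[OF summ] unfolding mm_def by (rule LIMSEQ_Suc)
  hence tl: "t \<longlonglongrightarrow> 0" unfolding t using tendsto_diff[OF tendsto_const[of mm]] by fastforce
  have le: "real n * rr \<mu> n \<le> t n" for n
  proof -
    have s1: "summable (\<lambda>j. pmf \<mu> (j + Suc n))"
      using summable_ignore_initial_segment[OF sums_summable[OF pmf_sums]] .
    have "real n * rr \<mu> n = (\<Sum>j. real n * pmf \<mu> (j + Suc n))"
      unfolding rr_tail by (rule suminf_mult[OF s1, symmetric])
    also have "\<dots> \<le> t n" unfolding t_def
      by (rule suminf_le) (auto intro!: mult_right_mono summable_mult s1 s1[simplified]
          summable_ignore_initial_segment[OF summ, of "Suc n", simplified])
    finally show ?thesis .
  qed
  show ?thesis
    by (rule tendsto_sandwich[OF _ _ tendsto_const tl]) (auto intro!: always_eventually mult_nonneg_nonneg rr_nonneg le)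
qed

lemma rr_partial: "(\<Sum>k<n. rr \<mu> k) = (\<Sum>s\<le>n. real s * pmf \<mu> s) + real n * rr \<mu> n"
proof (induction n)
  case 0 thus ?case by simp
next
  case (Suc n) thus ?case by (simp add: rr_Suc algebra_simps)
qed

lemma rr_sums: "rr \<mu> sums mm"
proof -
  have "(\<lambda>n. \<Sum>s\<le>n. real s * pmf \<mu> s) \<longlonglongrightarrow> mm"
    using summable_LIMSEQ'[OF summ] unfolding mm_def .
  from tendsto_add[OF this n_rr_lim] show ?thesis
    unfolding sums_def rr_partial by simp
qed

lemma rr_partial_lim: "(\<lambda>K. \<Sum>k=0..K. rr \<mu> k) \<longlonglongrightarrow> mm"
  using summable_LIMSEQ'[OF sums_summable[OF rr_sums]] sums_unique[OF rr_sums]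
  by (simp add: atLeast0AtMost)

lemma rr_partial_le: "(\<Sum>k\<in>S. rr \<mu> k) \<le> mm" if "finite S"
  using sum_le_suminf[OF sums_summable[OF rr_sums] that] sums_unique[OF rr_sums] rr_nonneg by simp

end


context ren begin

lemma uu_rec': "M \<ge> 1 \<Longrightarrow> uu \<mu> M = pmf \<mu> 1 * uu \<mu> (M - 1) + (\<Sum>x=2..M. pmf \<mu> x * uu \<mu> (M - x))"
  by (simp add: uu_rec sum.atLeast_Suc_atMost numeral_2_eq_2)

lemma sum_tail_pmf: "(\<Sum>x\<in>{J<..M}. pmf \<mu> x) \<le> rr \<mu> J"
proof -
  have "(\<Sum>x\<in>{..J}. pmf \<mu> x) + (\<Sum>x\<in>{J<..M}. pmf \<mu> x) = (\<Sum>x\<in>{..J} \<union> {J<..M}. pmf \<mu> x)"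
    by (rule sum.union_disjoint[symmetric]) auto
  also have "\<dots> \<le> 1" by (rule sum_pmf_le_1) simp
  finally show ?thesis by (simp add: rr_def)
qed

lemma sum_2M: "(\<Sum>x=2..M. pmf \<mu> x) \<le> 1 - pmf \<mu> 1"
proof -
  have "pmf \<mu> 1 + (\<Sum>x=2..M. pmf \<mu> x) = (\<Sum>x\<in>insert 1 {2..M}. pmf \<mu> x)" by simp
  also have "\<dots> \<le> 1" by (rule sum_pmf_le_1) simp
  finally show ?thesis by simp
qed

lemma sum_2J_lower: "J \<ge> 1 \<Longrightarrow> (\<Sum>x=2..J. pmf \<mu> x) \<ge> 1 - pmf \<mu> 1 - rr \<mu> J"
proof -
  assume J: "J \<ge> 1"
  have "{..J} = insert 0 (insert 1 {2..J})" using J by auto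
  hence "(\<Sum>x\<le>J. pmf \<mu> x) = pmf \<mu> 0 + (pmf \<mu> 1 + (\<Sum>x=2..J. pmf \<mu> x))" by simp
  thus ?thesis by (simp add: rr_def mu0)
qed

lemma get_J: "\<delta> > 0 \<Longrightarrow> \<exists>J\<ge>1. rr \<mu> J < \<delta>"
proof -
  assume "\<delta> > 0"
  from order_tendstoD(2)[OF rr_lim this] obtain J0 where "\<forall>n\<ge>J0. rr \<mu> n < \<delta>"
    by (auto simp: eventually_sequentially)
  thus ?thesis by (intro exI[of _ "J0 + 1"]) auto
qed

lemma claim_sup:
  assumes P1: "\<forall>\<epsilon>>0. \<exists>N. \<forall>n\<ge>N. uu \<mu> n < L + \<epsilon>"
    and P2: "\<forall>\<epsilon>>0. \<forall>N. \<exists>n\<ge>N. uu \<mu> n > L - \<epsilon>"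
    and L0: "L \<ge> 0"
  shows "\<forall>\<epsilon>>0. \<forall>N. \<exists>n\<ge>N. \<forall>i\<le>j. uu \<mu> (n - i) > L - \<epsilon>"
proof (induction j)
  case 0 show ?case using P2 by auto
next
  case (Suc j)
  show ?case
  proof (intro allI impI)
    fix \<epsilon> :: real and N :: nat assume e: "\<epsilon> > 0"
    define c where "c = pmf \<mu> 1"
    have c: "0 < c" "c \<le> 1" using mu1 pmf_le_1 by (auto simp: c_def)
    define \<delta> where "\<delta> = c * \<epsilon> / 4"
    have d: "\<delta> > 0" "\<delta> \<le> \<epsilon> / 4" using c e by (auto simp: \<delta>_def)
    obtain J where J: "rr \<mu> J < \<delta>" using get_J[OF d(1)] by auto
    obtain N0 where N0: "\<forall>n\<ge>N0. uu \<mu> n < L + \<delta>" using P1 d(1) by auto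
    obtain n where n: "n \<ge> N + N0 + J + j + 1" and nb: "\<forall>i\<le>j. uu \<mu> (n - i) > L - \<delta>"
      using Suc.IH d(1) by blast
    define M where "M = n - j"
    have M: "M \<ge> N0 + J + 1" "n - Suc j = M - 1" using n by (auto simp: M_def)
    have trm: "pmf \<mu> x * uu \<mu> (M - x) \<le> (L + \<delta>) * pmf \<mu> x + (if J < x then pmf \<mu> x else 0)" for x
    proof (cases "J < x")
      case True
      have "pmf \<mu> x * uu \<mu> (M - x) \<le> pmf \<mu> x" using uu_le_1 mult_left_mono[of "uu \<mu> (M - x)" 1 "pmf \<mu> x"] by simp
      thus ?thesis using True L0 d by (simp add: add_increasing)
    next
      case False
      hence "uu \<mu> (M - x) < L + \<delta>" using N0 M by auto
      thus ?thesis using False mult_left_mono[of "uu \<mu> (M - x)" "L + \<delta>" "pmf \<mu> x"] by (simp add: mult.commute)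
    qed
    have "(\<Sum>x=2..M. pmf \<mu> x * uu \<mu> (M - x)) \<le> (\<Sum>x=2..M. (L + \<delta>) * pmf \<mu> x + (if J < x then pmf \<mu> x else 0))"
      by (rule sum_mono) (rule trm)
    also have "\<dots> = (L + \<delta>) * (\<Sum>x=2..M. pmf \<mu> x) + (\<Sum>x=2..M. if J < x then pmf \<mu> x else 0)"
      by (simp add: sum.distrib sum_distrib_left)
    also have "(\<Sum>x=2..M. if J < x then pmf \<mu> x else 0) = (\<Sum>x\<in>{x\<in>{2..M}. J < x}. pmf \<mu> x)"
      by (rule sum.inter_filter[symmetric]) simp
    also have "(\<Sum>x\<in>{x\<in>{2..M}. J < x}. pmf \<mu> x) \<le> (\<Sum>x\<in>{J<..M}. pmf \<mu> x)"
      by (rule sum_mono2) auto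
    also have "\<dots> \<le> rr \<mu> J" by (rule sum_tail_pmf)
    also have "(L + \<delta>) * (\<Sum>x=2..M. pmf \<mu> x) \<le> (L + \<delta>) * (1 - c)"
      using sum_2M[of M] L0 d by (intro mult_left_mono) (auto simp: c_def)
    finally have S: "(\<Sum>x=2..M. pmf \<mu> x * uu \<mu> (M - x)) \<le> (L + \<delta>) * (1 - c) + \<delta>" using J by simp
    have "L - \<delta> < uu \<mu> M" using nb by (auto simp: M_def)
    also have "\<dots> = c * uu \<mu> (M - 1) + (\<Sum>x=2..M. pmf \<mu> x * uu \<mu> (M - x))"
      using M by (simp add: uu_rec' c_def)
    finally have A: "c * uu \<mu> (M - 1) > L - \<delta> - (\<Sum>x=2..M. pmf \<mu> x * uu \<mu> (M - x))" by simp
    have B: "L - \<delta> - ((L + \<delta>) * (1 - c) + \<delta>) = c * L - 3 * \<delta> + c * \<delta>"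
      by (simp add: algebra_simps)
    have C: "c * \<delta> \<ge> 0" using c d by simp
    have D: "c * (L - 3 * \<epsilon> / 4) = c * L - 3 * \<delta>" by (simp add: \<delta>_def algebra_simps)
    have "c * uu \<mu> (M - 1) > c * (L - 3 * \<epsilon> / 4)"
      using A S B C D by linarith
    hence "uu \<mu> (M - 1) > L - 3 * \<epsilon> / 4" using c by simp
    hence last: "uu \<mu> (n - Suc j) > L - \<epsilon>" using M e by simp
    show "\<exists>n\<ge>N. \<forall>i\<le>Suc j. uu \<mu> (n - i) > L - \<epsilon>"
    proof (intro exI[of _ n] conjI allI impI)
      show "N \<le> n" using n by simp
      fix i assume i: "i \<le> Suc j"
      show "uu \<mu> (n - i) > L - \<epsilon>"
      proof (cases "i = Suc j")
        case True thus ?thesis using last by simp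
      next
        case False hence "i \<le> j" using i by simp
        hence "uu \<mu> (n - i) > L - \<delta>" using nb by simp
        thus ?thesis using d by simp
      qed
    qed
  qed
qed

lemma sup_bound:
  assumes P1: "\<forall>\<epsilon>>0. \<exists>N. \<forall>n\<ge>N. uu \<mu> n < L + \<epsilon>"
    and P2: "\<forall>\<epsilon>>0. \<forall>N. \<exists>n\<ge>N. uu \<mu> n > L - \<epsilon>"
    and L0: "L \<ge> 0"
  shows "L * mm \<le> 1"
proof -
  have K: "L * (\<Sum>k=0..K. rr \<mu> k) \<le> 1" for K
  proof (rule field_le_epsilon)
    fix e :: real assume e: "e > 0"
    define R where "R = (\<Sum>k=0..K. rr \<mu> k)"
    have R: "R \<ge> 0" unfolding R_def by (simp add: sum_nonneg rr_nonneg)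
    define \<epsilon> where "\<epsilon> = e / (R + 1)"
    have ep: "\<epsilon> > 0" using e R by (simp add: \<epsilon>_def)
    obtain n where n: "n \<ge> K" and nb: "\<forall>i\<le>K. uu \<mu> (n - i) > L - \<epsilon>"
      using claim_sup[OF P1 P2 L0, of K] ep by blast
    have "R * (L - \<epsilon>) = (\<Sum>k=0..K. rr \<mu> k * (L - \<epsilon>))" by (simp add: R_def sum_distrib_right)
    also have "\<dots> \<le> (\<Sum>k=0..K. rr \<mu> k * uu \<mu> (n - k))"
      using nb by (intro sum_mono mult_left_mono) (auto simp: rr_nonneg less_imp_le)
    also have "\<dots> \<le> (\<Sum>k=0..n. rr \<mu> k * uu \<mu> (n - k))"
      using n by (intro sum_mono2) (auto intro!: mult_nonneg_nonneg rr_nonneg uu_nonneg)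
    also have "\<dots> = 1" by (rule renewal_identity[OF mu0])
    finally have "L * R \<le> 1 + \<epsilon> * R" by (simp add: algebra_simps)
    also have "\<epsilon> * R \<le> e" using e R by (simp add: \<epsilon>_def field_simps)
    finally show "L * (\<Sum>k=0..K. rr \<mu> k) \<le> 1 + e" by (simp add: R_def)
  qed
  show ?thesis
    by (rule LIMSEQ_le_const2[OF tendsto_mult[OF tendsto_const rr_partial_lim]]) (use K in auto)
qed

lemma claim_inf:
  assumes Q1: "\<forall>\<epsilon>>0. \<exists>N. \<forall>n\<ge>N. uu \<mu> n > L - \<epsilon>"
    and Q2: "\<forall>\<epsilon>>0. \<forall>N. \<exists>n\<ge>N. uu \<mu> n < L + \<epsilon>"
    and L1: "L \<le> 1"
  shows "\<forall>\<epsilon>>0. \<forall>N. \<exists>n\<ge>N. \<forall>i\<le>j. uu \<mu> (n - i) < L + \<epsilon>"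
proof (induction j)
  case 0 show ?case using Q2 by auto
next
  case (Suc j)
  show ?case
  proof (intro allI impI)
    fix \<epsilon> :: real and N :: nat assume e: "\<epsilon> > 0"
    define c where "c = pmf \<mu> 1"
    have c: "0 < c" "c \<le> 1" using mu1 pmf_le_1 by (auto simp: c_def)
    define \<delta> where "\<delta> = c * \<epsilon> / 4"
    have d: "\<delta> > 0" "\<delta> \<le> \<epsilon> / 4" using c e by (auto simp: \<delta>_def)
    obtain J where J1: "J \<ge> 1" and J: "rr \<mu> J < \<delta>" using get_J[OF d(1)] by auto
    obtain N0 where N0: "\<forall>n\<ge>N0. uu \<mu> n > L - \<delta>" using Q1 d(1) by auto
    obtain n where n: "n \<ge> N + N0 + J + j + 1" and nb: "\<forall>i\<le>j. uu \<mu> (n - i) < L + \<delta>"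
      using Suc.IH d(1) by blast
    define M where "M = n - j"
    have M: "M \<ge> N0 + J + 1" "n - Suc j = M - 1" using n by (auto simp: M_def)
    define S where "S = (\<Sum>x=2..J. pmf \<mu> x)"
    have S: "S \<le> 1 - c" "S \<ge> 1 - c - rr \<mu> J"
      using sum_2M[of J] sum_2J_lower[OF J1] by (auto simp: S_def c_def)
    have LS: "(L - \<delta>) * S \<ge> (L - \<delta>) * (1 - c) - rr \<mu> J"
    proof (cases "L - \<delta> \<ge> 0")
      case True
      have "(L - \<delta>) * S \<ge> (L - \<delta>) * (1 - c - rr \<mu> J)" using True S by (intro mult_left_mono) auto
      moreover have "(L - \<delta>) * rr \<mu> J \<le> rr \<mu> J"
        using L1 d rr_nonneg[of J] mult_right_mono[of "L - \<delta>" 1 "rr \<mu> J"] by simp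
      ultimately show ?thesis by (simp add: algebra_simps)
    next
      case False
      hence "(L - \<delta>) * S \<ge> (L - \<delta>) * (1 - c)" using S by (intro mult_left_mono_neg) auto
      thus ?thesis using rr_nonneg[of J] by simp
    qed
    have "S * (L - \<delta>) = (\<Sum>x=2..J. pmf \<mu> x * (L - \<delta>))" by (simp add: S_def sum_distrib_right)
    also have "\<dots> \<le> (\<Sum>x=2..J. pmf \<mu> x * uu \<mu> (M - x))"
    proof (rule sum_mono, rule mult_left_mono)
      fix x assume "x \<in> {2..J}"
      thus "L - \<delta> \<le> uu \<mu> (M - x)" using N0 M by (auto intro: less_imp_le)
    qed simp
    also have "\<dots> \<le> (\<Sum>x=2..M. pmf \<mu> x * uu \<mu> (M - x))"
      using M by (intro sum_mono2) (auto intro!: mult_nonneg_nonneg uu_nonneg)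
    finally have S2: "(\<Sum>x=2..M. pmf \<mu> x * uu \<mu> (M - x)) \<ge> (L - \<delta>) * (1 - c) - rr \<mu> J" using LS by (simp add: mult.commute)
    have "c * uu \<mu> (M - 1) + (\<Sum>x=2..M. pmf \<mu> x * uu \<mu> (M - x)) = uu \<mu> M"
      using M by (simp add: uu_rec' c_def)
    also have "\<dots> < L + \<delta>" using nb by (auto simp: M_def)
    finally have A: "c * uu \<mu> (M - 1) < L + \<delta> - (\<Sum>x=2..M. pmf \<mu> x * uu \<mu> (M - x))" by simp
    have B: "L + \<delta> - ((L - \<delta>) * (1 - c) - rr \<mu> J) = c * L + \<delta> * (2 - c) + rr \<mu> J"
      by (simp add: algebra_simps)
    have C: "\<delta> * (2 - c) \<le> 2 * \<delta>" using c d by (simp add: algebra_simps)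
    have D: "c * (L + 3 * \<epsilon> / 4) = c * L + 3 * \<delta>" by (simp add: \<delta>_def algebra_simps)
    have "c * uu \<mu> (M - 1) < c * (L + 3 * \<epsilon> / 4)"
      using A S2 B C D J by linarith
    hence "uu \<mu> (M - 1) < L + 3 * \<epsilon> / 4" using c by simp
    hence last: "uu \<mu> (n - Suc j) < L + \<epsilon>" using M e by simp
    show "\<exists>n\<ge>N. \<forall>i\<le>Suc j. uu \<mu> (n - i) < L + \<epsilon>"
    proof (intro exI[of _ n] conjI allI impI)
      show "N \<le> n" using n by simp
      fix i assume i: "i \<le> Suc j"
      show "uu \<mu> (n - i) < L + \<epsilon>"
      proof (cases "i = Suc j")
        case True thus ?thesis using last by simp
      next
        case False hence "i \<le> j" using i by simp
        hence "uu \<mu> (n - i) < L + \<delta>" using nb by simp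
        thus ?thesis using d by simp
      qed
    qed
  qed
qed

lemma inf_bound:
  assumes Q1: "\<forall>\<epsilon>>0. \<exists>N. \<forall>n\<ge>N. uu \<mu> n > L - \<epsilon>"
    and Q2: "\<forall>\<epsilon>>0. \<forall>N. \<exists>n\<ge>N. uu \<mu> n < L + \<epsilon>"
    and L1: "L \<le> 1"
  shows "1 \<le> L * mm"
proof -
  have K: "1 \<le> L * (\<Sum>k=0..K. rr \<mu> k) + (mm - (\<Sum>k=0..K. rr \<mu> k))" for K
  proof (rule field_le_epsilon)
    fix e :: real assume e: "e > 0"
    define R where "R = (\<Sum>k=0..K. rr \<mu> k)"
    have R: "R \<ge> 0" unfolding R_def by (simp add: sum_nonneg rr_nonneg)
    define \<epsilon> where "\<epsilon> = e / (R + 1)"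
    have ep: "\<epsilon> > 0" using e R by (simp add: \<epsilon>_def)
    obtain n where n: "n \<ge> K" and nb: "\<forall>i\<le>K. uu \<mu> (n - i) < L + \<epsilon>"
      using claim_inf[OF Q1 Q2 L1, of K] ep by blast
    have split: "{0..n} = {0..K} \<union> {K<..n}" using n by auto
    have "1 = (\<Sum>k=0..n. rr \<mu> k * uu \<mu> (n - k))" by (rule renewal_identity[OF mu0, symmetric])
    also have "\<dots> = (\<Sum>k=0..K. rr \<mu> k * uu \<mu> (n - k)) + (\<Sum>k\<in>{K<..n}. rr \<mu> k * uu \<mu> (n - k))"
      unfolding split by (rule sum.union_disjoint) auto
    also have "(\<Sum>k=0..K. rr \<mu> k * uu \<mu> (n - k)) \<le> (\<Sum>k=0..K. rr \<mu> k * (L + \<epsilon>))"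
      using nb by (intro sum_mono mult_left_mono) (auto simp: rr_nonneg less_imp_le)
    also have "(\<Sum>k\<in>{K<..n}. rr \<mu> k * uu \<mu> (n - k)) \<le> (\<Sum>k\<in>{K<..n}. rr \<mu> k)"
      using uu_le_1 by (intro sum_mono) (auto intro: mult_left_le rr_nonneg)
    also have "(\<Sum>k\<in>{K<..n}. rr \<mu> k) \<le> mm - R"
    proof -
      have "R + (\<Sum>k\<in>{K<..n}. rr \<mu> k) = (\<Sum>k\<in>{0..K} \<union> {K<..n}. rr \<mu> k)"
        unfolding R_def by (rule sum.union_disjoint[symmetric]) auto
      also have "\<dots> \<le> mm" by (rule rr_partial_le) simp
      finally show ?thesis by simp
    qed
    also have "(\<Sum>k=0..K. rr \<mu> k * (L + \<epsilon>)) = R * (L + \<epsilon>)" by (simp add: R_def sum_distrib_right)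
    finally have "1 \<le> L * R + (mm - R) + \<epsilon> * R" by (simp add: algebra_simps)
    also have "\<epsilon> * R \<le> e" using e R by (simp add: \<epsilon>_def field_simps)
    finally show "1 \<le> L * (\<Sum>k=0..K. rr \<mu> k) + (mm - (\<Sum>k=0..K. rr \<mu> k)) + e" by (simp add: R_def)
  qed
  have "(\<lambda>K. L * (\<Sum>k=0..K. rr \<mu> k) + (mm - (\<Sum>k=0..K. rr \<mu> k))) \<longlonglongrightarrow> L * mm + (mm - mm)"
    by (intro tendsto_intros rr_partial_lim)
  hence "1 \<le> L * mm + (mm - mm)" by (rule LIMSEQ_le_const) (use K in auto)
  thus ?thesis by simp
qed

theorem renewal_thm: "uu \<mu> \<longlonglongrightarrow> 1 / mm"
proof -
  obtain L1 where P1: "\<forall>\<epsilon>>0. \<exists>N. \<forall>n\<ge>N. uu \<mu> n < L1 + \<epsilon>"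
    and P2: "\<forall>\<epsilon>>0. \<forall>N. \<exists>n\<ge>N. uu \<mu> n > L1 - \<epsilon>"
    using limsup_exists[of "uu \<mu>"] uu_nonneg uu_le_1 by blast
  obtain L2 where R1: "\<forall>\<epsilon>>0. \<exists>N. \<forall>n\<ge>N. 1 - uu \<mu> n < L2 + \<epsilon>"
    and R2: "\<forall>\<epsilon>>0. \<forall>N. \<exists>n\<ge>N. 1 - uu \<mu> n > L2 - \<epsilon>"
    using limsup_exists[of "\<lambda>n. 1 - uu \<mu> n"] uu_nonneg uu_le_1 by fastforce
  define \<eta> where "\<eta> = 1 - L2"
  have Q1: "\<forall>\<epsilon>>0. \<exists>N. \<forall>n\<ge>N. uu \<mu> n > \<eta> - \<epsilon>"
  proof (intro allI impI)
    fix \<epsilon> :: real assume "\<epsilon> > 0"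
    then obtain N where "\<forall>n\<ge>N. 1 - uu \<mu> n < L2 + \<epsilon>" using R1 by blast
    thus "\<exists>N. \<forall>n\<ge>N. uu \<mu> n > \<eta> - \<epsilon>" by (intro exI[of _ N]) (auto simp: \<eta>_def)
  qed
  have Q2: "\<forall>\<epsilon>>0. \<forall>N. \<exists>n\<ge>N. uu \<mu> n < \<eta> + \<epsilon>"
  proof (intro allI impI)
    fix \<epsilon> :: real and N assume "\<epsilon> > 0"
    then obtain n where "n \<ge> N" "1 - uu \<mu> n > L2 - \<epsilon>" using R2 by blast
    thus "\<exists>n\<ge>N. uu \<mu> n < \<eta> + \<epsilon>" by (auto simp: \<eta>_def)
  qed
  have L10: "L1 \<ge> 0"
  proof (rule ccontr)
    assume "\<not> L1 \<ge> 0"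
    then obtain N where "\<forall>n\<ge>N. uu \<mu> n < L1 + (- L1)" using P1 by (metis neg_0_less_iff_less not_le)
    thus False using uu_nonneg[of \<mu> N] by auto
  qed
  have eta1: "\<eta> \<le> 1"
  proof (rule ccontr)
    assume "\<not> \<eta> \<le> 1"
    then obtain N where "\<forall>n\<ge>N. uu \<mu> n > \<eta> - (\<eta> - 1)" using Q1 by (metis diff_gt_0_iff_gt not_le)
    thus False using uu_le_1[of N] by auto
  qed
  have b1: "L1 * mm \<le> 1" by (rule sup_bound[OF P1 P2 L10])
  have b2: "1 \<le> \<eta> * mm" by (rule inf_bound[OF Q1 Q2 eta1])
  have le: "\<eta> \<le> L1"
  proof (rule ccontr)
    assume "\<not> \<eta> \<le> L1"
    hence g: "(\<eta> - L1) / 2 > 0" by simp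
    obtain N1 where N1: "\<forall>n\<ge>N1. uu \<mu> n < L1 + (\<eta> - L1) / 2" using P1 g by blast
    obtain N2 where N2: "\<forall>n\<ge>N2. uu \<mu> n > \<eta> - (\<eta> - L1) / 2" using Q1 g by blast
    have "uu \<mu> (N1 + N2) < L1 + (\<eta> - L1) / 2" "uu \<mu> (N1 + N2) > \<eta> - (\<eta> - L1) / 2"
      using N1 N2 by auto
    thus False by (simp add: field_simps)
  qed
  have mm: "mm > 0" by (rule mm_pos)
  have "\<eta> * mm \<le> L1 * mm" using le mm by (simp add: mult_right_mono)
  hence "L1 * mm = 1" "\<eta> * mm = 1" using b1 b2 by auto
  hence L1eq: "L1 = 1 / mm" and etaeq: "\<eta> = 1 / mm"
    using mm by (auto simp: field_simps)
  show ?thesis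
  proof (rule LIMSEQ_I)
    fix r :: real assume r: "r > 0"
    obtain N1 where N1: "\<forall>n\<ge>N1. uu \<mu> n < L1 + r" using P1 r by blast
    obtain N2 where N2: "\<forall>n\<ge>N2. uu \<mu> n > \<eta> - r" using Q1 r by blast
    show "\<exists>no. \<forall>n\<ge>no. norm (uu \<mu> n - 1 / mm) < r"
    proof (intro exI[of _ "N1 + N2"] allI impI)
      fix n assume n: "n \<ge> N1 + N2"
      have "uu \<mu> n < 1 / mm + r" using N1 n L1eq by auto
      moreover have "uu \<mu> n > 1 / mm - r" using N2 n etaeq by auto
      ultimately show "norm (uu \<mu> n - 1 / mm) < r" by (simp add: abs_less_iff)
    qed
  qed
qed

end


lemma cesaro0:
  fixes e :: "nat \<Rightarrow> real"
  assumes "e \<longlonglongrightarrow> 0"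
  shows "(\<lambda>n. (\<Sum>i=0..n. \<bar>e i\<bar>) / real n) \<longlonglongrightarrow> 0"
proof (rule LIMSEQ_I)
  fix r :: real assume r: "r > 0"
  obtain N where N: "\<forall>n\<ge>N. norm (e n - 0) < r / 2" using LIMSEQ_D[OF assms, of "r/2"] r by auto
  define C where "C = (\<Sum>i<N. \<bar>e i\<bar>)"
  have C: "C \<ge> 0" unfolding C_def by (simp add: sum_nonneg)
  define no where "no = max N (nat \<lceil>2 * C / r\<rceil> + 3)"
  show "\<exists>no. \<forall>n\<ge>no. norm ((\<Sum>i=0..n. \<bar>e i\<bar>) / real n - 0) < r"
  proof (intro exI[of _ no] allI impI)
    fix n assume n: "n \<ge> no"
    hence nN: "n \<ge> N" and n2: "real n \<ge> 2 * C / r + 2"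
      unfolding no_def by (auto, linarith)
    have "2 * C / r \<ge> 0" using C r by simp
    hence npos: "real n > 0" using n2 by linarith
    have split: "{0..n} = {..<N} \<union> {N..n}" using nN by auto
    have "(\<Sum>i=0..n. \<bar>e i\<bar>) = C + (\<Sum>i=N..n. \<bar>e i\<bar>)"
      unfolding split C_def by (rule sum.union_disjoint) auto
    also have "(\<Sum>i=N..n. \<bar>e i\<bar>) \<le> (\<Sum>i=N..n. r / 2)"
      using N by (intro sum_mono) (auto intro: less_imp_le)
    also have "\<dots> = real (Suc n - N) * (r / 2)" by simp
    also have "\<dots> \<le> real (Suc n) * (r / 2)" using r by (intro mult_right_mono) auto
    finally have le: "(\<Sum>i=0..n. \<bar>e i\<bar>) \<le> C + real (Suc n) * (r / 2)" by simp
    have "C + real (Suc n) * (r / 2) < r * real n"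
    proof -
      have "2 * C + 2 * r \<le> r * real n" using n2 r by (simp add: field_simps)
      moreover have "real (Suc n) * (r / 2) = (r + r * real n) / 2" by (simp add: algebra_simps)
      ultimately show ?thesis using r by (simp add: field_simps)
    qed
    hence "(\<Sum>i=0..n. \<bar>e i\<bar>) < r * real n" using le by linarith
    hence "(\<Sum>i=0..n. \<bar>e i\<bar>) / real n < r" using npos by (simp add: field_simps)
    moreover have "(\<Sum>i=0..n. \<bar>e i\<bar>) / real n \<ge> 0" by (simp add: sum_nonneg)
    ultimately show "norm ((\<Sum>i=0..n. \<bar>e i\<bar>) / real n - 0) < r" by simp
  qed
qed

lemma sum_rev0: "(\<Sum>i=0..n. f (n - i)) = (\<Sum>i=0..(n::nat). (f i :: real))"
  using sum.atLeastAtMost_rev[of "\<lambda>i. f (n - i)" 0 n] by simp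

lemma lim_Suc_over: "(\<lambda>n. real (Suc n) / real n) \<longlonglongrightarrow> 1"
proof -
  have "(\<lambda>n. 1 + 1 / real n) \<longlonglongrightarrow> 1 + 0"
    by (intro tendsto_intros lim_1_over_n)
  moreover have "\<forall>\<^sub>F n in sequentially. 1 + 1 / real n = real (Suc n) / real n"
    by (auto simp: eventually_sequentially field_simps intro!: exI[of _ 1])
  ultimately show ?thesis by (simp add: tendsto_cong)
qed

lemma conv1:
  fixes a b :: "nat \<Rightarrow> real"
  assumes a: "a \<longlonglongrightarrow> \<alpha>" and b: "b \<longlonglongrightarrow> \<beta>" and B: "\<And>i. \<bar>b i\<bar> \<le> B"
  shows "(\<lambda>n. (\<Sum>i=0..n. a i * b (n - i)) / real n) \<longlonglongrightarrow> \<alpha> * \<beta>"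
proof -
  define E where "E n = (\<Sum>i=0..n. a i * b (n - i)) - real (Suc n) * (\<alpha> * \<beta>)" for n
  have Eeq: "E n = (\<Sum>i=0..n. (a i - \<alpha>) * b (n - i)) + \<alpha> * (\<Sum>i=0..n. b (n - i) - \<beta>)" for n
    by (simp add: E_def algebra_simps sum.distrib sum_subtractf sum_distrib_left)
  have Ebound: "\<bar>E n\<bar> \<le> B * (\<Sum>i=0..n. \<bar>a i - \<alpha>\<bar>) + \<bar>\<alpha>\<bar> * (\<Sum>i=0..n. \<bar>b i - \<beta>\<bar>)" for n
  proof -
    have "\<bar>(\<Sum>i=0..n. (a i - \<alpha>) * b (n - i))\<bar> \<le> (\<Sum>i=0..n. \<bar>(a i - \<alpha>) * b (n - i)\<bar>)" by (rule sum_abs)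
    also have "\<dots> \<le> (\<Sum>i=0..n. B * \<bar>a i - \<alpha>\<bar>)"
    proof (intro sum_mono)
      fix i show "\<bar>(a i - \<alpha>) * b (n - i)\<bar> \<le> B * \<bar>a i - \<alpha>\<bar>"
        using mult_left_mono[OF B[of "n - i"], of "\<bar>a i - \<alpha>\<bar>"] by (simp add: abs_mult mult.commute)
    qed
    finally have 1: "\<bar>(\<Sum>i=0..n. (a i - \<alpha>) * b (n - i))\<bar> \<le> B * (\<Sum>i=0..n. \<bar>a i - \<alpha>\<bar>)"
      by (simp add: sum_distrib_left)
    have "\<bar>\<alpha> * (\<Sum>i=0..n. b (n - i) - \<beta>)\<bar> = \<bar>\<alpha>\<bar> * \<bar>\<Sum>i=0..n. b i - \<beta>\<bar>"
      by (simp add: abs_mult sum_rev0[of "\<lambda>i. b i - \<beta>"])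
    also have "\<dots> \<le> \<bar>\<alpha>\<bar> * (\<Sum>i=0..n. \<bar>b i - \<beta>\<bar>)" by (intro mult_left_mono sum_abs) auto
    finally show ?thesis using 1 unfolding Eeq by linarith
  qed
  have l1: "(\<lambda>n. (\<Sum>i=0..n. \<bar>a i - \<alpha>\<bar>) / real n) \<longlonglongrightarrow> 0"
    by (rule cesaro0) (use a in \<open>simp add: LIM_zero\<close>)
  have l2: "(\<lambda>n. (\<Sum>i=0..n. \<bar>b i - \<beta>\<bar>) / real n) \<longlonglongrightarrow> 0"
    by (rule cesaro0) (use b in \<open>simp add: LIM_zero\<close>)
  have "(\<lambda>n. B * ((\<Sum>i=0..n. \<bar>a i - \<alpha>\<bar>) / real n) + \<bar>\<alpha>\<bar> * ((\<Sum>i=0..n. \<bar>b i - \<beta>\<bar>) / real n)) \<longlonglongrightarrow> B * 0 + \<bar>\<alpha>\<bar> * 0"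
    by (intro tendsto_intros l1 l2)
  hence g0: "(\<lambda>n. B * ((\<Sum>i=0..n. \<bar>a i - \<alpha>\<bar>) / real n) + \<bar>\<alpha>\<bar> * ((\<Sum>i=0..n. \<bar>b i - \<beta>\<bar>) / real n)) \<longlonglongrightarrow> 0"
    by simp
  have l3: "(\<lambda>n. E n / real n) \<longlonglongrightarrow> 0"
  proof (rule Lim_null_comparison[OF always_eventually g0], intro allI)
    fix n
    have "norm (E n / real n) = \<bar>E n\<bar> / real n" by (simp add: abs_divide)
    also have "\<dots> \<le> (B * (\<Sum>i=0..n. \<bar>a i - \<alpha>\<bar>) + \<bar>\<alpha>\<bar> * (\<Sum>i=0..n. \<bar>b i - \<beta>\<bar>)) / real n"
      by (intro divide_right_mono Ebound) auto
    finally show "norm (E n / real n) \<le> B * ((\<Sum>i=0..n. \<bar>a i - \<alpha>\<bar>) / real n) + \<bar>\<alpha>\<bar> * ((\<Sum>i=0..n. \<bar>b i - \<beta>\<bar>) / real n)"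
      by (simp add: add_divide_distrib)
  qed
  have "(\<lambda>n. real (Suc n) / real n * (\<alpha> * \<beta>) + E n / real n) \<longlonglongrightarrow> 1 * (\<alpha> * \<beta>) + 0"
    by (intro tendsto_intros lim_Suc_over l3)
  moreover have "real (Suc n) / real n * (\<alpha> * \<beta>) + E n / real n = (\<Sum>i=0..n. a i * b (n - i)) / real n" for n
    by (simp add: E_def add_divide_distrib[symmetric] diff_divide_distrib)
  ultimately show ?thesis by simp
qed


lemma conv2:
  fixes A b :: "nat \<Rightarrow> real"
  assumes A: "(\<lambda>n. A n / real n) \<longlonglongrightarrow> \<alpha>" and A0: "A 0 = 0"
    and b: "b \<longlonglongrightarrow> \<beta>" and B: "\<And>i. \<bar>b i\<bar> \<le> B"
  shows "(\<lambda>n. (\<Sum>i=0..n. A i * b (n - i)) / (real n)^2) \<longlonglongrightarrow> \<alpha> * \<beta> / 2"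
proof -
  define e where "e i = A i / real i - \<alpha>" for i
  have e: "e \<longlonglongrightarrow> 0" unfolding e_def using A by (simp add: LIM_zero)
  have Aeq: "A i = real i * (\<alpha> + e i)" for i
    by (cases "i = 0") (auto simp: e_def A0)
  define F where "F n = (\<Sum>i=0..n. A i * b (n - i)) - \<alpha> * \<beta> * (\<Sum>i=0..n. real i)" for n
  have Feq: "F n = \<alpha> * (\<Sum>i=0..n. real i * (b (n - i) - \<beta>)) + (\<Sum>i=0..n. real i * e i * b (n - i))" for n
    by (simp add: F_def Aeq algebra_simps sum.distrib sum_subtractf sum_distrib_left)
  have Fbound: "\<bar>F n\<bar> \<le> real n * (\<bar>\<alpha>\<bar> * (\<Sum>i=0..n. \<bar>b i - \<beta>\<bar>) + B * (\<Sum>i=0..n. \<bar>e i\<bar>))" for n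
  proof -
    have "\<bar>\<Sum>i=0..n. real i * (b (n - i) - \<beta>)\<bar> \<le> (\<Sum>i=0..n. \<bar>real i * (b (n - i) - \<beta>)\<bar>)" by (rule sum_abs)
    also have "\<dots> \<le> (\<Sum>i=0..n. real n * \<bar>b (n - i) - \<beta>\<bar>)"
      by (intro sum_mono) (auto simp: abs_mult intro!: mult_right_mono)
    also have "\<dots> = real n * (\<Sum>i=0..n. \<bar>b i - \<beta>\<bar>)"
      by (simp add: sum_distrib_left[symmetric] sum_rev0[of "\<lambda>i. \<bar>b i - \<beta>\<bar>"])
    finally have 1: "\<bar>\<Sum>i=0..n. real i * (b (n - i) - \<beta>)\<bar> \<le> real n * (\<Sum>i=0..n. \<bar>b i - \<beta>\<bar>)" .
    have "\<bar>\<Sum>i=0..n. real i * e i * b (n - i)\<bar> \<le> (\<Sum>i=0..n. \<bar>real i * e i * b (n - i)\<bar>)" by (rule sum_abs)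
    also have "\<dots> \<le> (\<Sum>i=0..n. real n * B * \<bar>e i\<bar>)"
    proof (intro sum_mono)
      fix i assume i: "i \<in> {0..n}"
      have "\<bar>real i * e i * b (n - i)\<bar> = real i * (\<bar>e i\<bar> * \<bar>b (n - i)\<bar>)" by (simp add: abs_mult)
      also have "\<dots> \<le> real n * (\<bar>e i\<bar> * B)"
        using i by (intro mult_mono mult_left_mono B) auto
      finally show "\<bar>real i * e i * b (n - i)\<bar> \<le> real n * B * \<bar>e i\<bar>" by (simp add: algebra_simps)
    qed
    also have "\<dots> = real n * B * (\<Sum>i=0..n. \<bar>e i\<bar>)" by (simp add: sum_distrib_left)
    finally have 2: "\<bar>\<Sum>i=0..n. real i * e i * b (n - i)\<bar> \<le> real n * B * (\<Sum>i=0..n. \<bar>e i\<bar>)" .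
    have "\<bar>F n\<bar> \<le> \<bar>\<alpha>\<bar> * \<bar>\<Sum>i=0..n. real i * (b (n - i) - \<beta>)\<bar> + \<bar>\<Sum>i=0..n. real i * e i * b (n - i)\<bar>"
      unfolding Feq by (simp add: abs_mult[symmetric] abs_triangle_ineq)
    also have "\<dots> \<le> \<bar>\<alpha>\<bar> * (real n * (\<Sum>i=0..n. \<bar>b i - \<beta>\<bar>)) + real n * B * (\<Sum>i=0..n. \<bar>e i\<bar>)"
      by (intro add_mono mult_left_mono 1 2) auto
    finally show ?thesis by (simp add: algebra_simps)
  qed
  have l1: "(\<lambda>n. (\<Sum>i=0..n. \<bar>b i - \<beta>\<bar>) / real n) \<longlonglongrightarrow> 0"
    by (rule cesaro0) (use b in \<open>simp add: LIM_zero\<close>)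
  have l2: "(\<lambda>n. (\<Sum>i=0..n. \<bar>e i\<bar>) / real n) \<longlonglongrightarrow> 0" by (rule cesaro0[OF e])
  have "(\<lambda>n. \<bar>\<alpha>\<bar> * ((\<Sum>i=0..n. \<bar>b i - \<beta>\<bar>) / real n) + B * ((\<Sum>i=0..n. \<bar>e i\<bar>) / real n)) \<longlonglongrightarrow> \<bar>\<alpha>\<bar> * 0 + B * 0"
    by (intro tendsto_intros l1 l2)
  hence g0: "(\<lambda>n. \<bar>\<alpha>\<bar> * ((\<Sum>i=0..n. \<bar>b i - \<beta>\<bar>) / real n) + B * ((\<Sum>i=0..n. \<bar>e i\<bar>) / real n)) \<longlonglongrightarrow> 0"
    by simp
  have l3: "(\<lambda>n. F n / (real n)^2) \<longlonglongrightarrow> 0"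
  proof (rule Lim_null_comparison[OF always_eventually g0], intro allI)
    fix n
    show "norm (F n / (real n)^2) \<le> \<bar>\<alpha>\<bar> * ((\<Sum>i=0..n. \<bar>b i - \<beta>\<bar>) / real n) + B * ((\<Sum>i=0..n. \<bar>e i\<bar>) / real n)"
    proof (cases "n = 0")
      case True thus ?thesis by simp
    next
      case False
      have "norm (F n / (real n)^2) = \<bar>F n\<bar> / (real n)^2" by (simp add: abs_divide)
      also have "\<dots> \<le> real n * (\<bar>\<alpha>\<bar> * (\<Sum>i=0..n. \<bar>b i - \<beta>\<bar>) + B * (\<Sum>i=0..n. \<bar>e i\<bar>)) / (real n)^2"
        by (intro divide_right_mono Fbound) auto
      also have "\<dots> = \<bar>\<alpha>\<bar> * ((\<Sum>i=0..n. \<bar>b i - \<beta>\<bar>) / real n) + B * ((\<Sum>i=0..n. \<bar>e i\<bar>) / real n)"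
        using False by (simp add: power2_eq_square field_simps)
      finally show ?thesis .
    qed
  qed
  have "(\<lambda>n. \<alpha> * \<beta> / 2 * (real (Suc n) / real n) + F n / (real n)^2) \<longlonglongrightarrow> \<alpha> * \<beta> / 2 * 1 + 0"
    by (intro tendsto_intros lim_Suc_over l3)
  moreover have "\<alpha> * \<beta> / 2 * (real (Suc n) / real n) + F n / (real n)^2 = (\<Sum>i=0..n. A i * b (n - i)) / (real n)^2" if "n > 0" for n
  proof -
    have g: "(\<Sum>i=0..n. real i) = real n * (real n + 1) / 2" using double_gauss_sum[of n, where 'a=real] by simp
    show ?thesis using that unfolding F_def g by (simp add: power2_eq_square field_simps)
  qed
  hence "\<forall>\<^sub>F n in sequentially. \<alpha> * \<beta> / 2 * (real (Suc n) / real n) + F n / (real n)^2 = (\<Sum>i=0..n. A i * b (n - i)) / (real n)^2"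
    by (auto simp: eventually_sequentially intro!: exI[of _ 1])
  ultimately show ?thesis by (simp add: tendsto_cong)
qed


context ren begin

lemma gg_nonneg: "gg \<mu> A N \<ge> 0"
  unfolding gg_def by (intro sum_nonneg mult_nonneg_nonneg uu_nonneg) auto

lemma gg_le_1: "gg \<mu> A N \<le> 1"
proof -
  have "gg \<mu> A N \<le> (\<Sum>x=0..N. pmf \<mu> x)"
    unfolding gg_def
  proof (rule sum_mono)
    fix x
    have "(if x \<in> A then pmf \<mu> x else 0) * uu \<mu> (N - x) \<le> (if x \<in> A then pmf \<mu> x else 0) * 1"
      by (intro mult_left_mono uu_le_1) auto
    also have "\<dots> \<le> pmf \<mu> x" by auto
    finally show "(if x \<in> A then pmf \<mu> x else 0) * uu \<mu> (N - x) \<le> pmf \<mu> x" .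
  qed
  also have "\<dots> \<le> 1" by (rule sum_pmf_le_1) simp
  finally show ?thesis .
qed

lemma gg_abs: "\<bar>gg \<mu> A N\<bar> \<le> 1" using gg_nonneg gg_le_1 by (simp add: abs_le_iff)

lemma aa_0: "aa \<mu> A 0 = 0" by (simp add: aa_def compositions_0)

lemma mm_pos': "1 / mm > 0" using mm_pos by simp

lemma aa_lim: assumes g: "gg \<mu> A \<longlonglongrightarrow> \<gamma>"
  shows "(\<lambda>n. aa \<mu> A n / real n) \<longlonglongrightarrow> 1 / mm * \<gamma>"
  unfolding aa_conv[OF mu0] by (rule conv1[OF renewal_thm g gg_abs])

lemma pp_lim: assumes g: "gg \<mu> A \<longlonglongrightarrow> \<gamma>"
  shows "(\<lambda>n. pp \<mu> A n / (real n)^2) \<longlonglongrightarrow> 1 / mm * \<gamma> * \<gamma> / 2"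
  unfolding pp_conv[OF mu0] by (rule conv2[OF aa_lim[OF g] aa_0 g gg_abs])

lemma second_moment:
  "(\<Sum>xs\<in>compositions n. comp_weight \<mu> xs * (real (cntA A xs) / real n - \<gamma>)^2)
   = (aa \<mu> A n + 2 * pp \<mu> A n) / (real n)^2 - 2 * \<gamma> * (aa \<mu> A n / real n) + \<gamma>^2 * uu \<mu> n"
proof -
  have t: "comp_weight \<mu> xs * (real (cntA A xs) / real n - \<gamma>)^2
    = (comp_weight \<mu> xs * real (cntA A xs) + 2 * (comp_weight \<mu> xs * real (prs A xs))) / (real n)^2
      - 2 * \<gamma> * (comp_weight \<mu> xs * real (cntA A xs) / real n) + \<gamma>^2 * comp_weight \<mu> xs" for xs
  proof -
    have cs: "(real (cntA A xs))^2 = real (cntA A xs) + 2 * real (prs A xs)"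
      using arg_cong[OF cntA_sq[of A xs], of real] by simp
    have "(real (cntA A xs) / real n - \<gamma>)^2 = (real (cntA A xs))^2 / (real n)^2 - 2 * \<gamma> * (real (cntA A xs) / real n) + \<gamma>^2"
      by (simp add: power2_diff power_divide algebra_simps)
    hence sq': "(real (cntA A xs) / real n - \<gamma>)^2 = (real (cntA A xs) + 2 * real (prs A xs)) / (real n)^2 - 2 * \<gamma> * (real (cntA A xs) / real n) + \<gamma>^2"
      unfolding cs .
    show ?thesis unfolding sq' by (simp add: algebra_simps add_divide_distrib)
  qed
  show ?thesis
    unfolding t aa_def pp_def uu_def
    by (simp add: sum.distrib sum_subtractf sum_divide_distrib[symmetric] sum_distrib_left[symmetric]
        sum_distrib_right[symmetric])
qed

lemma conc:
  assumes g: "gg \<mu> A \<longlonglongrightarrow> \<gamma>" and e: "\<epsilon> > 0"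
  shows "(\<lambda>n. measure_pmf.prob (cond_sizes \<mu> n) {xs. \<bar>real (cntA A xs) / real n - \<gamma>\<bar> > \<epsilon>}) \<longlonglongrightarrow> 0"
proof -
  define V where "V n = ((aa \<mu> A n / real n) * (1 / real n) + 2 * (pp \<mu> A n / (real n)^2)
      - 2 * \<gamma> * (aa \<mu> A n / real n)) / uu \<mu> n + \<gamma>^2" for n
  have "(\<lambda>n. V n) \<longlonglongrightarrow> ((1 / mm * \<gamma>) * 0 + 2 * (1 / mm * \<gamma> * \<gamma> / 2) - 2 * \<gamma> * (1 / mm * \<gamma>)) / (1 / mm) + \<gamma>^2"
    unfolding V_def
    by (intro tendsto_intros aa_lim[OF g] pp_lim[OF g] renewal_thm lim_1_over_n) (use mm_pos in simp)
  moreover have "((1 / mm * \<gamma>) * 0 + 2 * (1 / mm * \<gamma> * \<gamma> / 2) - 2 * \<gamma> * (1 / mm * \<gamma>)) / (1 / mm) + \<gamma>^2 = 0"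
    using mm_pos by (simp add: field_simps power2_eq_square)
  ultimately have V0: "V \<longlonglongrightarrow> 0" by simp
  have bound: "measure_pmf.prob (cond_sizes \<mu> n) {xs. \<bar>real (cntA A xs) / real n - \<gamma>\<bar> > \<epsilon>} \<le> V n / \<epsilon>^2" for n
  proof -
    have up: "uu \<mu> n > 0" by (rule uu_pos[OF mu1])
    have "measure_pmf.prob (cond_sizes \<mu> n) {xs. \<bar>real (cntA A xs) / real n - \<gamma>\<bar> > \<epsilon>}
        = (\<Sum>xs\<in>compositions n \<inter> {xs. \<bar>real (cntA A xs) / real n - \<gamma>\<bar> > \<epsilon>}. comp_weight \<mu> xs) / uu \<mu> n"
      by (rule prob_cond_sizes[OF mu1])
    also have "(\<Sum>xs\<in>compositions n \<inter> {xs. \<bar>real (cntA A xs) / real n - \<gamma>\<bar> > \<epsilon>}. comp_weight \<mu> xs)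
        \<le> (\<Sum>xs\<in>compositions n \<inter> {xs. \<bar>real (cntA A xs) / real n - \<gamma>\<bar> > \<epsilon>}.
              comp_weight \<mu> xs * (real (cntA A xs) / real n - \<gamma>)^2 / \<epsilon>^2)"
    proof (rule sum_mono)
      fix xs assume "xs \<in> compositions n \<inter> {xs. \<bar>real (cntA A xs) / real n - \<gamma>\<bar> > \<epsilon>}"
      hence "\<epsilon> < \<bar>real (cntA A xs) / real n - \<gamma>\<bar>" by simp
      hence "\<epsilon>^2 < \<bar>real (cntA A xs) / real n - \<gamma>\<bar>^2" by (rule power_strict_mono) (use e in auto)
      hence "\<epsilon>^2 < (real (cntA A xs) / real n - \<gamma>)^2" by simp
      hence "1 \<le> (real (cntA A xs) / real n - \<gamma>)^2 / \<epsilon>^2" using e by (simp add: field_simps)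
      hence "comp_weight \<mu> xs * 1 \<le> comp_weight \<mu> xs * ((real (cntA A xs) / real n - \<gamma>)^2 / \<epsilon>^2)"
        by (rule mult_left_mono) (rule comp_weight_nonneg)
      thus "comp_weight \<mu> xs \<le> comp_weight \<mu> xs * (real (cntA A xs) / real n - \<gamma>)^2 / \<epsilon>^2"
        by simp
    qed
    also have "\<dots> \<le> (\<Sum>xs\<in>compositions n. comp_weight \<mu> xs * (real (cntA A xs) / real n - \<gamma>)^2 / \<epsilon>^2)"
      by (rule sum_mono2) (auto simp: finite_compositions comp_weight_nonneg)
    also have "\<dots> = ((aa \<mu> A n + 2 * pp \<mu> A n) / (real n)^2 - 2 * \<gamma> * (aa \<mu> A n / real n) + \<gamma>^2 * uu \<mu> n) / \<epsilon>^2"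
      by (simp add: sum_divide_distrib[symmetric] second_moment)
    finally have "measure_pmf.prob (cond_sizes \<mu> n) {xs. \<bar>real (cntA A xs) / real n - \<gamma>\<bar> > \<epsilon>}
        \<le> ((aa \<mu> A n + 2 * pp \<mu> A n) / (real n)^2 - 2 * \<gamma> * (aa \<mu> A n / real n) + \<gamma>^2 * uu \<mu> n) / \<epsilon>^2 / uu \<mu> n"
      using up by (simp add: divide_right_mono)
    also have "\<dots> = V n / \<epsilon>^2"
      using up by (simp add: V_def field_simps power2_eq_square add_divide_distrib)
    finally show ?thesis .
  qed
  have "(\<lambda>n. V n / \<epsilon>^2) \<longlonglongrightarrow> 0 / \<epsilon>^2" by (intro tendsto_intros V0) (use e in simp)
  hence lim0: "(\<lambda>n. V n / \<epsilon>^2) \<longlonglongrightarrow> 0" by simp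
  show ?thesis
    by (rule tendsto_sandwich[where f="\<lambda>n. 0" and h="\<lambda>n. V n / \<epsilon>^2"])
       (auto intro!: always_eventually bound lim0)
qed

end


lemma scheffe:
  fixes P :: "nat \<Rightarrow> nat pmf" and Q :: "nat pmf"
  assumes low: "\<And>k \<epsilon>. \<epsilon> > 0 \<Longrightarrow> eventually (\<lambda>n. pmf (P n) k > pmf Q k - \<epsilon>) sequentially"
  shows "(\<lambda>n. pmf (P n) k) \<longlonglongrightarrow> pmf Q k"
proof (rule order_tendstoI)
  fix a assume "a < pmf Q k"
  thus "eventually (\<lambda>n. a < pmf (P n) k) sequentially"
    using low[of "pmf Q k - a" k] by simp
next
  fix a assume a: "pmf Q k < a"
  define \<epsilon> where "\<epsilon> = a - pmf Q k"
  have e: "\<epsilon> > 0" using a by (simp add: \<epsilon>_def)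
  have "(\<lambda>J. measure_pmf.prob Q {..J}) \<longlonglongrightarrow> measure_pmf.prob Q (\<Union>J. {..J})"
    by (rule measure_pmf.finite_Lim_measure_incseq) (auto simp: incseq_def)
  moreover have "(\<Union>J. {..J::nat}) = UNIV" by auto
  ultimately have lim: "(\<lambda>J. \<Sum>j\<le>J. pmf Q j) \<longlonglongrightarrow> 1" by (simp add: measure_measure_pmf_finite)
  from order_tendstoD(1)[OF lim, of "1 - \<epsilon> / 2"] e obtain J0 where
    J0: "\<forall>J\<ge>J0. (\<Sum>j\<le>J. pmf Q j) > 1 - \<epsilon> / 2" by (auto simp: eventually_sequentially)
  define J where "J = J0 + k"
  have J: "(\<Sum>j\<le>J. pmf Q j) > 1 - \<epsilon> / 2" "k \<le> J" using J0 by (auto simp: J_def)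
  define F where "F = {..J} - {k}"
  have finF: "finite F" by (simp add: F_def)
  define \<eta> where "\<eta> = \<epsilon> / (2 * (real J + 1))"
  have eta: "\<eta> > 0" using e by (simp add: \<eta>_def)
  have ev: "eventually (\<lambda>n. \<forall>j\<in>F. pmf (P n) j > pmf Q j - \<eta>) sequentially"
    using finF by (rule eventually_ball_finite) (use low eta in auto)
  show "eventually (\<lambda>n. pmf (P n) k < a) sequentially"
    using ev
  proof eventually_elim
    case (elim n)
    have cardF: "real (card F) \<le> real J + 1" unfolding F_def
      using card_Diff_subset[of "{k}" "{..J}"] J(2) by auto
    have "pmf (P n) k + (\<Sum>j\<in>F. pmf (P n) j) = (\<Sum>j\<le>J. pmf (P n) j)"
      using J(2) unfolding F_def by (simp add: sum.remove[of "{..J}" k])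
    also have "\<dots> \<le> 1"
      using measure_measure_pmf_finite[of "{..J}" "P n"] measure_pmf.prob_le_1[of "P n" "{..J}"] by simp
    finally have 1: "pmf (P n) k \<le> 1 - (\<Sum>j\<in>F. pmf (P n) j)" by simp
    have "(\<Sum>j\<in>F. pmf Q j - \<eta>) \<le> (\<Sum>j\<in>F. pmf (P n) j)"
      using elim by (intro sum_mono) (auto intro: less_imp_le)
    hence 2: "(\<Sum>j\<in>F. pmf Q j) - real (card F) * \<eta> \<le> (\<Sum>j\<in>F. pmf (P n) j)"
      by (simp add: sum_subtractf)
    have "real (card F) * \<eta> \<le> (real J + 1) * \<eta>" using cardF eta by (intro mult_right_mono) auto
    also have "\<dots> = \<epsilon> / 2" using e by (simp add: \<eta>_def field_simps)
    finally have 3: "real (card F) * \<eta> \<le> \<epsilon> / 2" .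
    have "pmf Q k + (\<Sum>j\<in>F. pmf Q j) = (\<Sum>j\<le>J. pmf Q j)"
      using J(2) unfolding F_def by (simp add: sum.remove[of "{..J}" k])
    hence 4: "(\<Sum>j\<in>F. pmf Q j) > 1 - \<epsilon> / 2 - pmf Q k" using J(1) by simp
    have 5: "pmf (P n) k \<le> 1 - (\<Sum>j\<in>F. pmf Q j) + real (card F) * \<eta>" using 1 2 by linarith
    show "pmf (P n) k < a" using 5 3 4 unfolding \<epsilon>_def by argo
  qed
qed

lemma cdf_pmf:
  fixes M :: "nat pmf"
  shows "cdf (distr (measure_pmf M) borel real) x = (\<Sum>k\<in>{k. real k \<le> x}. pmf M k)"
proof -
  have fin: "finite {k::nat. real k \<le> x}"
    by (rule finite_subset[of _ "{..nat \<lceil>x\<rceil>}"]) (auto, linarith)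
  have "cdf (distr (measure_pmf M) borel real) x = measure (distr (measure_pmf M) borel real) {..x}"
    by (simp add: cdf_def)
  also have "\<dots> = measure (measure_pmf M) (real -` {..x})"
    by (subst measure_distr) auto
  also have "real -` {..x} = {k::nat. real k \<le> x}" by auto
  also have "measure (measure_pmf M) {k. real k \<le> x} = (\<Sum>k\<in>{k. real k \<le> x}. pmf M k)"
    by (rule measure_measure_pmf_finite[OF fin])
  finally show ?thesis .
qed

lemma weak_conv_pmf:
  fixes P :: "nat \<Rightarrow> nat pmf" and Q :: "nat pmf"
  assumes "\<And>k. (\<lambda>n. pmf (P n) k) \<longlonglongrightarrow> pmf Q k"
  shows "weak_conv_m (\<lambda>n. distr (measure_pmf (P n)) borel real) (distr (measure_pmf Q) borel real)"
  unfolding weak_conv_m_def weak_conv_def cdf_pmf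
  by (auto intro!: tendsto_sum assms)


lemma ratio_bound:
  fixes x y q c \<delta> :: real
  assumes x: "x \<ge> 0" and y: "y > 0" and c: "c > 0" and d: "\<delta> > 0" and q: "q \<le> 1"
  shows "x / y \<ge> (q * c - \<delta>) / (c + \<delta>) - (if \<bar>x - q * c\<bar> > \<delta> then 1 else 0) - (if \<bar>y - c\<bar> > \<delta> then 1 else 0)"
proof -
  have f0: "x / y \<ge> 0" using x y by simp
  have L1: "(q * c - \<delta>) / (c + \<delta>) \<le> 1"
  proof -
    have "q * c \<le> c" using q c by (simp add: mult_le_cancel_right1)
    hence "q * c - \<delta> \<le> c + \<delta>" using d by simp
    thus ?thesis using c d by (simp add: divide_le_eq_1)
  qed
  show ?thesis
  proof (cases "\<bar>x - q * c\<bar> > \<delta> \<or> \<bar>y - c\<bar> > \<delta>")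
    case True thus ?thesis using f0 L1 by auto
  next
    case False
    hence g: "x \<ge> q * c - \<delta>" "y \<le> c + \<delta>" by auto
    show ?thesis
    proof (cases "q * c - \<delta> \<le> 0")
      case True
      hence "(q * c - \<delta>) / (c + \<delta>) \<le> 0" using c d by (simp add: divide_nonpos_pos)
      thus ?thesis using False f0 by auto
    next
      case nn: False
      have "(q * c - \<delta>) / (c + \<delta>) \<le> (q * c - \<delta>) / y"
        using nn y g by (intro divide_left_mono) auto
      also have "\<dots> \<le> x / y" using g y by (intro divide_right_mono) auto
      finally show ?thesis using False by auto
    qed
  qed
qed

context ren begin

lemma gg_single: "gg \<mu> {k} (n + k) = pmf \<mu> k * uu \<mu> n"
proof -
  have "gg \<mu> {k} (n + k) = (\<Sum>x=0..n+k. if x = k then pmf \<mu> k * uu \<mu> n else 0)"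
    unfolding gg_def by (rule sum.cong) auto
  also have "\<dots> = pmf \<mu> k * uu \<mu> n" by (simp add: sum.delta)
  finally show ?thesis .
qed

lemma gg_single_lim: "gg \<mu> {k} \<longlonglongrightarrow> pmf \<mu> k / mm"
proof (rule LIMSEQ_offset[of _ k])
  have "(\<lambda>n. pmf \<mu> k * uu \<mu> n) \<longlonglongrightarrow> pmf \<mu> k * (1 / mm)"
    by (intro tendsto_intros renewal_thm)
  thus "(\<lambda>n. gg \<mu> {k} (n + k)) \<longlonglongrightarrow> pmf \<mu> k / mm" by (simp add: gg_single)
qed

lemma gg_univ: "n \<ge> 1 \<Longrightarrow> gg \<mu> UNIV n = uu \<mu> n"
  unfolding gg_def by (simp add: sum_zero_head mu0 uu_rec)

lemma gg_univ_lim: "gg \<mu> UNIV \<longlonglongrightarrow> 1 / mm"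
proof (rule LIMSEQ_offset[of _ 1])
  have "(\<lambda>n. uu \<mu> (n + 1)) \<longlonglongrightarrow> 1 / mm"
    by (rule LIMSEQ_ignore_initial_segment[OF renewal_thm])
  thus "(\<lambda>n. gg \<mu> UNIV (n + 1)) \<longlonglongrightarrow> 1 / mm" by (simp add: gg_univ)
qed

lemma part_a:
  "conv_in_prob_const
      (\<lambda>n. map_pmf (\<lambda>Q. real (card {B\<in>Q. card B = s}) / real n) (ESC n \<mu>)) (pmf \<mu> s / mm)"
  unfolding conv_in_prob_const_def
proof (intro allI impI)
  fix \<epsilon> :: real assume e: "\<epsilon> > 0"
  have eq: "map_pmf (\<lambda>Q. real (card {B\<in>Q. card B = s}) / real n) (ESC n \<mu>)
      = map_pmf (\<lambda>xs. real (cntA {s} xs) / real n) (cond_sizes \<mu> n)" for n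
  proof (rule ESC_map[OF mu1])
    fix xs \<sigma> assume "xs \<in> compositions n" "\<sigma> permutes {1..n}"
    from card_partition_filter[OF this, of "\<lambda>x. x = s"]
    show "real (card {B\<in>partition_of n xs \<sigma>. card B = s}) / real n = real (cntA {s} xs) / real n"
      by (simp add: cntA_def)
  qed
  have "(\<lambda>n. measure_pmf.prob (cond_sizes \<mu> n) {xs. \<bar>real (cntA {s} xs) / real n - pmf \<mu> s / mm\<bar> > \<epsilon>}) \<longlonglongrightarrow> 0"
    by (rule conc[OF gg_single_lim e])
  thus "(\<lambda>n. measure_pmf.prob (map_pmf (\<lambda>Q. real (card {B\<in>Q. card B = s}) / real n) (ESC n \<mu>))
          {x. \<epsilon> < \<bar>x - pmf \<mu> s / mm\<bar>}) \<longlonglongrightarrow> 0"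
    by (simp add: eq vimage_def)
qed

definition "PP n = bind_pmf (ESC n \<mu>) (\<lambda>Q. map_pmf card (pmf_of_set Q))"

lemma lower:
  assumes e: "\<epsilon> > 0"
  shows "eventually (\<lambda>n. pmf (PP n) k > pmf \<mu> k - \<epsilon>) sequentially"
proof -
  define q where "q = pmf \<mu> k"
  define c where "c = 1 / mm"
  have c: "c > 0" using mm_pos by (simp add: c_def)
  have q: "0 \<le> q" "q \<le> 1" by (auto simp: q_def pmf_le_1)
  define \<delta> where "\<delta> = \<epsilon> * c / 4"
  have d: "\<delta> > 0" using e c by (simp add: \<delta>_def)
  define L where "L = (q * c - \<delta>) / (c + \<delta>)"
  have Lq: "L \<ge> q - \<epsilon> / 2"
  proof -
    have "L - q = - (\<delta> * (1 + q)) / (c + \<delta>)" using c d by (simp add: L_def field_simps)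
    also have "\<dots> \<ge> - (\<delta> * 2) / c"
    proof -
      have "\<delta> * (1 + q) / (c + \<delta>) \<le> \<delta> * 2 / c"
        using c d q by (intro frac_le mult_left_mono) auto
      thus ?thesis by simp
    qed
    also have "- (\<delta> * 2) / c = - \<epsilon> / 2" using c by (simp add: \<delta>_def field_simps)
    finally show ?thesis by simp
  qed
  define bad1 where "bad1 n = {xs. \<bar>real (cntA {k} xs) / real n - pmf \<mu> k / mm\<bar> > \<delta>}" for n
  define bad2 where "bad2 n = {xs. \<bar>real (cntA UNIV xs) / real n - 1 / mm\<bar> > \<delta>}" for n
  have l1: "(\<lambda>n. measure_pmf.prob (cond_sizes \<mu> n) (bad1 n)) \<longlonglongrightarrow> 0"
    unfolding bad1_def by (rule conc[OF gg_single_lim d])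
  have l2: "(\<lambda>n. measure_pmf.prob (cond_sizes \<mu> n) (bad2 n)) \<longlonglongrightarrow> 0"
    unfolding bad2_def by (rule conc[OF gg_univ_lim d])
  have ev1: "eventually (\<lambda>n. measure_pmf.prob (cond_sizes \<mu> n) (bad1 n) < \<epsilon> / 4) sequentially"
    by (rule order_tendstoD(2)[OF l1]) (use e in simp)
  have ev2: "eventually (\<lambda>n. measure_pmf.prob (cond_sizes \<mu> n) (bad2 n) < \<epsilon> / 4) sequentially"
    by (rule order_tendstoD(2)[OF l2]) (use e in simp)
  have ev3: "eventually (\<lambda>n. n \<ge> 1) sequentially" by (rule eventually_ge_at_top)
  show ?thesis
    using ev1 ev2 ev3
  proof eventually_elim
    case (elim n)
    define f where "f xs = real (length (filter (\<lambda>x. x = k) xs)) / real (length xs)" for xs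
    define W where "W xs = comp_weight \<mu> xs" for xs
    have up: "uu \<mu> n > 0" by (rule uu_pos[OF mu1])
    have pt: "f xs \<ge> L - (if xs \<in> bad1 n then 1 else 0) - (if xs \<in> bad2 n then 1 else 0)"
      if xs: "xs \<in> compositions n" for xs
    proof -
      have ne: "xs \<noteq> []" using xs elim(3) by (auto simp: compositions_def)
      have "f xs = (real (cntA {k} xs) / real n) / (real (cntA UNIV xs) / real n)"
        using elim(3) by (simp add: f_def cntA_def)
      moreover have "(real (cntA {k} xs) / real n) / (real (cntA UNIV xs) / real n) \<ge>
          (q * c - \<delta>) / (c + \<delta>) - (if \<bar>real (cntA {k} xs) / real n - q * c\<bar> > \<delta> then 1 else 0)
            - (if \<bar>real (cntA UNIV xs) / real n - c\<bar> > \<delta> then 1 else 0)"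
        by (rule ratio_bound) (use ne elim(3) c d q in \<open>auto simp: cntA_def\<close>)
      ultimately show ?thesis
        by (simp add: L_def bad1_def bad2_def q_def c_def)
    qed
    have e1: "pmf (PP n) k = (\<Sum>xs\<in>compositions n. W xs * f xs) / uu \<mu> n"
      unfolding PP_def pmf_uniform_cluster[OF mu1 elim(3)] integral_cond_sizes[OF mu1] f_def W_def ..
    have e2: "(\<Sum>xs\<in>compositions n. W xs * f xs) \<ge>
        (\<Sum>xs\<in>compositions n. W xs * (L - (if xs \<in> bad1 n then 1 else 0) - (if xs \<in> bad2 n then 1 else 0)))"
      using pt by (intro sum_mono mult_left_mono) (auto simp: W_def comp_weight_nonneg)
    have e3: "(\<Sum>xs\<in>compositions n. W xs * (L - (if xs \<in> bad1 n then 1 else 0) - (if xs \<in> bad2 n then 1 else 0)))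
        = L * uu \<mu> n - (\<Sum>xs\<in>compositions n \<inter> bad1 n. W xs) - (\<Sum>xs\<in>compositions n \<inter> bad2 n. W xs)"
    proof -
      have "(\<Sum>xs\<in>compositions n. W xs * (L - (if xs \<in> bad1 n then 1 else 0) - (if xs \<in> bad2 n then 1 else 0)))
          = (\<Sum>xs\<in>compositions n. L * W xs - (if xs \<in> bad1 n then W xs else 0) - (if xs \<in> bad2 n then W xs else 0))"
        by (rule sum.cong) (auto simp: algebra_simps)
      also have "\<dots> = L * uu \<mu> n - (\<Sum>xs\<in>compositions n \<inter> bad1 n. W xs) - (\<Sum>xs\<in>compositions n \<inter> bad2 n. W xs)"
        unfolding W_def uu_def by (simp add: sum_subtractf sum_distrib_left[symmetric] sum.inter_restrict finite_compositions)
      finally show ?thesis .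
    qed
    have e4: "pmf (PP n) k \<ge> (L * uu \<mu> n - (\<Sum>xs\<in>compositions n \<inter> bad1 n. W xs) - (\<Sum>xs\<in>compositions n \<inter> bad2 n. W xs)) / uu \<mu> n"
      unfolding e1 using e2 e3 up by (metis divide_right_mono less_imp_le)
    have e5: "(L * uu \<mu> n - (\<Sum>xs\<in>compositions n \<inter> bad1 n. W xs) - (\<Sum>xs\<in>compositions n \<inter> bad2 n. W xs)) / uu \<mu> n
       = L - measure_pmf.prob (cond_sizes \<mu> n) (bad1 n) - measure_pmf.prob (cond_sizes \<mu> n) (bad2 n)"
      using up unfolding W_def by (simp add: prob_cond_sizes[OF mu1] diff_divide_distrib)
    show ?case using e4 e5 elim(1,2) Lq by (simp add: q_def)
  qed
qed

lemma part_b: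
  "weak_conv_m (\<lambda>n. distr (measure_pmf (bind_pmf (ESC n \<mu>) (\<lambda>Q. map_pmf card (pmf_of_set Q)))) borel real)
     (distr (measure_pmf \<mu>) borel real)"
  using weak_conv_pmf[where P=PP and Q=\<mu>] scheffe[where P=PP and Q=\<mu>] lower unfolding PP_def by blast

end

theorem theorem2:
  fixes \<mu> :: "nat pmf"
  assumes "pmf \<mu> 0 = 0"
    and "pmf \<mu> 1 > 0"
    and "summable (\<lambda>s. real s * pmf \<mu> s)"
  shows "(\<forall>s\<ge>1. conv_in_prob_const
            (\<lambda>n. map_pmf (\<lambda>Q. real (card {B\<in>Q. card B = s}) / real n) (ESC n \<mu>))
            (pmf \<mu> s / (\<Sum>l. real l * pmf \<mu> l)))
       \<and> weak_conv_m
            (\<lambda>n. distr (measure_pmf (bind_pmf (ESC n \<mu>) (\<lambda>Q. map_pmf card (pmf_of_set Q))))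
                    borel real)
            (distr (measure_pmf \<mu>) borel real)"
  proof -
  interpret ren \<mu> using assms by unfold_locales
  have mmeq: "(\<Sum>l. real l * pmf \<mu> l) = mm" by (simp add: mm_def)
  show ?thesis using part_a part_b unfolding mmeq by blast
qed

end
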